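(* Let $\mathbb{F}$ be an algebraically closed field of characteristic $0$, $D$ a finite-dimensional $\mathbb{F}$-vector space with $\dim D\geq2$, and $\Gamma$ an additive subgroup of $D^{\ast}$ with $\bigcap_{\alpha\in\Gamma}\ker\alpha=\{0\}$. Let $\mu,\eta\in D^{\ast}$ and $\zeta\in\Gamma$. Then: (i) $\mathscr{M}_\mu$ is irreducible if $\mu\notin\Gamma$; if $\mu\in\Gamma$, then $\mathscr{M}_\mu=\big(\bigoplus_{\alpha\in\Gamma\setminus\{-\mu\}}\mathbb{F}v_\alpha\big)\oplus\mathbb{F}v_{-\mu}$ is a direct sum of two irreducible submodules. (ii) If $\eta\neq0$, then $\mathscr{A}_{\zeta,\eta}$ and $\mathscr{B}_{\zeta,\eta}$ are indecomposable but reducible; $\mathscr{A}_{\zeta,\eta}$ has the irreducible submodule $\bigoplus_{\alpha\in\Gamma\setminus\{-\zeta\}}\mathbb{F}v_\alpha$, while $\mathscr{B}_{\zeta,\eta}$ has the one-dimensional trivial submodule $\mathbb{F}v_{-\zeta}$ and the quotient $\mathscr{B}_{\zeta,\eta}/\mathbb{F}v_{-\zeta}$ is irreducible. If $\eta=0$, then $\mathscr{A}_{\zeta,0}\simeq\mathscr{B}_{\zeta,0}\simeq\mathscr{M}_0$.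
   Context: $\mathbb{F}[\Gamma]$ has basis $\{x^\alpha\mid\alpha\in\Gamma\}$ with $x^\alpha x^\beta=x^{\alpha+\beta}$; $\mathcal{W}(\Gamma,D)=\mathbb{F}[\Gamma]\otimes D$ (elements $x^\alpha\partial$) has bracket $[x^\alpha\partial_1,x^\beta\partial_2]=x^{\alpha+\beta}(\beta(\partial_1)\partial_2-\alpha(\partial_2)\partial_1)$. $\mathcal{S}(\Gamma,D)$ is the subalgebra spanned by $x^\alpha\partial$ with $\alpha\in\Gamma\setminus\{0\}$, $\partial\in\ker\alpha$, graded by $\Gamma$. The modules below are $\mathcal{S}(\Gamma,D)$-modules with basis $\{v_\beta\mid\beta\in\Gamma\}$, where $\alpha\in\Gamma\setminus\{0\}$, $\partial\in\ker\alpha$: $\mathscr{M}_\mu$: $x^\alpha\partial.v_\beta=(\beta+\mu)(\partial)v_{\alpha+\beta}$ for all $\beta$. $\mathscr{A}_{\zeta,\eta}$: $x^\alpha\partial.v_\beta=(\beta+\zeta)(\partial)v_{\alpha+\beta}$ for $\beta\neq-\zeta$, and $x^\alpha\partial.v_{-\zeta}=\eta(\partial)v_{\alpha-\zeta}$. $\mathscr{B}_{\zeta,\eta}$: $x^\alpha\partial.v_\beta=(\beta+\zeta)(\partial)v_{\alpha+\beta}$ for $\beta\neq-\alpha-\zeta$, and $x^\alpha\partial.v_{-\alpha-\zeta}=\eta(\partial)v_{-\zeta}$. *)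

theory Defs
  imports "HOL-Computational_Algebra.Polynomial" "HOL-Library.Function_Algebras"
begin

text \<open>Coordinates: D = ('n \<Rightarrow> 'a) with 'n finite (dim D = CARD('n)); D* is identified
with ('n \<Rightarrow> 'a) via the pairing below, alpha(d) = pair alpha d.\<close>

definition alg_closed :: "'a::field itself \<Rightarrow> bool" where
  "alg_closed _ \<longleftrightarrow> (\<forall>p :: 'a poly. 0 < degree p \<longrightarrow> (\<exists>x. poly p x = 0))"

definition pair :: "('n::finite \<Rightarrow> 'a::field) \<Rightarrow> ('n \<Rightarrow> 'a) \<Rightarrow> 'a" where
  "pair \<alpha> d = (\<Sum>i\<in>UNIV. \<alpha> i * d i)"

definition add_subgroup :: "('n \<Rightarrow> 'a::field) set \<Rightarrow> bool" where
  "add_subgroup G \<longleftrightarrow> 0 \<in> G \<and> (\<forall>a\<in>G. \<forall>b\<in>G. a + b \<in> G) \<and> (\<forall>a\<in>G. - a \<in> G)"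

definition nondeg :: "('n::finite \<Rightarrow> 'a::field) set \<Rightarrow> bool" where
  "nondeg G \<longleftrightarrow> (\<forall>d. (\<forall>\<alpha>\<in>G. pair \<alpha> d = 0) \<longrightarrow> d = 0)"

text \<open>Module elements: finitely supported coefficient families (f beta = coefficient of v_beta),
support inside Gamma.\<close>
definition modspace :: "('n \<Rightarrow> 'a::field) set \<Rightarrow> (('n \<Rightarrow> 'a) \<Rightarrow> 'a) set" where
  "modspace G = {f. finite {\<beta>. f \<beta> \<noteq> 0} \<and> {\<beta>. f \<beta> \<noteq> 0} \<subseteq> G}"

text \<open>Generators x^alpha d of S(Gamma,D): alpha in Gamma - {0}, d in ker alpha.\<close>
definition gens :: "('n::finite \<Rightarrow> 'a::field) set \<Rightarrow> (('n \<Rightarrow> 'a) \<times> ('n \<Rightarrow> 'a)) set" where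
  "gens G = {(\<alpha>, d). \<alpha> \<in> G \<and> \<alpha> \<noteq> 0 \<and> pair \<alpha> d = 0}"

text \<open>A coefficient function c: x^alpha d . v_beta = c alpha d beta v_(alpha+beta);
action extended linearly.\<close>
type_synonym ('n, 'a) coef = "('n \<Rightarrow> 'a) \<Rightarrow> ('n \<Rightarrow> 'a) \<Rightarrow> ('n \<Rightarrow> 'a) \<Rightarrow> 'a"

definition act :: "('n, 'a::field) coef \<Rightarrow> ('n \<Rightarrow> 'a) \<Rightarrow> ('n \<Rightarrow> 'a)
    \<Rightarrow> (('n \<Rightarrow> 'a) \<Rightarrow> 'a) \<Rightarrow> (('n \<Rightarrow> 'a) \<Rightarrow> 'a)" where
  "act c \<alpha> d f = (\<lambda>\<gamma>. c \<alpha> d (\<gamma> - \<alpha>) * f (\<gamma> - \<alpha>))"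

definition cM :: "('n::finite \<Rightarrow> 'a::field) \<Rightarrow> ('n, 'a) coef" where
  "cM \<mu> \<alpha> d \<beta> = pair (\<beta> + \<mu>) d"

definition cA :: "('n::finite \<Rightarrow> 'a::field) \<Rightarrow> ('n \<Rightarrow> 'a) \<Rightarrow> ('n, 'a) coef" where
  "cA \<zeta> \<eta> \<alpha> d \<beta> = (if \<beta> = - \<zeta> then pair \<eta> d else pair (\<beta> + \<zeta>) d)"

definition cB :: "('n::finite \<Rightarrow> 'a::field) \<Rightarrow> ('n \<Rightarrow> 'a) \<Rightarrow> ('n, 'a) coef" where
  "cB \<zeta> \<eta> \<alpha> d \<beta> = (if \<beta> = - \<alpha> - \<zeta> then pair \<eta> d else pair (\<beta> + \<zeta>) d)"

definition submodule :: "('n::finite \<Rightarrow> 'a::field) set \<Rightarrow> ('n, 'a) coef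
    \<Rightarrow> (('n \<Rightarrow> 'a) \<Rightarrow> 'a) set \<Rightarrow> bool" where
  "submodule G c W \<longleftrightarrow> W \<subseteq> modspace G \<and> (\<lambda>_. 0) \<in> W
     \<and> (\<forall>f\<in>W. \<forall>g\<in>W. (\<lambda>b. f b + g b) \<in> W)
     \<and> (\<forall>a f. f \<in> W \<longrightarrow> (\<lambda>b. a * f b) \<in> W)
     \<and> (\<forall>(\<alpha>, d)\<in>gens G. \<forall>f\<in>W. act c \<alpha> d f \<in> W)"

definition irreducible_sub where
  "irreducible_sub G c W \<longleftrightarrow> submodule G c W \<and> W \<noteq> {\<lambda>_. 0}
     \<and> (\<forall>U. submodule G c U \<and> U \<subseteq> W \<longrightarrow> U = {\<lambda>_. 0} \<or> U = W)"

definition irreducible_mod where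
  "irreducible_mod G c \<longleftrightarrow> irreducible_sub G c (modspace G)"

definition reducible_mod where
  "reducible_mod G c \<longleftrightarrow> (\<exists>U. submodule G c U \<and> U \<noteq> {\<lambda>_. 0} \<and> U \<noteq> modspace G)"

definition indecomposable_mod where
  "indecomposable_mod G c \<longleftrightarrow> modspace G \<noteq> {\<lambda>_. 0} \<and>
     \<not> (\<exists>U W. submodule G c U \<and> submodule G c W \<and> U \<noteq> {\<lambda>_. 0} \<and> W \<noteq> {\<lambda>_. 0}
           \<and> U \<inter> W = {\<lambda>_. 0}
           \<and> modspace G = {h. \<exists>f\<in>U. \<exists>g\<in>W. h = (\<lambda>b. f b + g b)})"

text \<open>Irreducibility of the quotient module M/U, expressed via the correspondence
between submodules of M/U and submodules of M containing U.\<close>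
definition irreducible_quot where
  "irreducible_quot G c U \<longleftrightarrow> submodule G c U \<and> U \<noteq> modspace G \<and>
     (\<forall>W. submodule G c W \<and> U \<subseteq> W \<longrightarrow> W = U \<or> W = modspace G)"

definition mod_iso where
  "mod_iso G c1 c2 \<longleftrightarrow> (\<exists>T. bij_betw T (modspace G) (modspace G)
     \<and> (\<forall>f\<in>modspace G. \<forall>g\<in>modspace G. T (\<lambda>b. f b + g b) = (\<lambda>b. T f b + T g b))
     \<and> (\<forall>a. \<forall>f\<in>modspace G. T (\<lambda>b. a * f b) = (\<lambda>b. a * T f b))
     \<and> (\<forall>(\<alpha>, d)\<in>gens G. \<forall>f\<in>modspace G. T (act c1 \<alpha> d f) = act c2 \<alpha> d (T f)))"

definition span_of where
  "span_of G B = {f \<in> modspace G. \<forall>\<beta>. \<beta> \<notin> B \<longrightarrow> f \<beta> = 0}"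

end

theory Submission imports Defs begin


lemma pair_add: "pair (a + b) d = pair a d + pair b d"
  unfolding pair_def by (simp add: distrib_right sum.distrib)
lemma pair_minus: "pair (- a) d = - pair a d"
  unfolding pair_def by (simp add: sum_negf)
lemma pair_diff: "pair (a - b) d = pair a d - pair b d"
  unfolding pair_def by (simp add: left_diff_distrib sum_subtractf)
lemma pair_zero[simp]: "pair 0 d = 0"
  unfolding pair_def by simp
lemma pair_zeroR[simp]: "pair a 0 = 0"
  unfolding pair_def by simp
lemma pair_addR: "pair a (x + y) = pair a x + pair a y"
  unfolding pair_def by (simp add: distrib_left sum.distrib)
lemma pair_scaleL: "pair (\<lambda>i. c * a i) d = c * pair a d"
  unfolding pair_def by (simp add: sum_distrib_left mult.assoc)
lemma pair_delta: "pair a (\<lambda>k. if k = j then x else 0) = a j * x"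
  unfolding pair_def by (simp add: if_distrib cong: if_cong)

definition line :: "('n \<Rightarrow> 'a::field) \<Rightarrow> ('n \<Rightarrow> 'a) set" where
  "line v = range (\<lambda>c. (\<lambda>i. c * v i))"

lemma in_lineI: "x = (\<lambda>i. c * v i) \<Longrightarrow> x \<in> line v"
  unfolding line_def by blast
lemma in_lineE: "x \<in> line v \<Longrightarrow> (\<And>c. x = (\<lambda>i. c * v i) \<Longrightarrow> P) \<Longrightarrow> P"
  unfolding line_def by blast
lemma zero_in_line: "0 \<in> line v"
  by (rule in_lineI[where c=0]) (simp add: fun_eq_iff)
lemma line_zero: "x \<in> line 0 \<Longrightarrow> x = 0"
  by (erule in_lineE) (simp add: fun_eq_iff)

lemma kernel_line:
  fixes a b :: "'n::finite \<Rightarrow> 'a::field"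
  assumes a: "a \<noteq> 0" and k: "\<forall>d. pair a d = 0 \<longrightarrow> pair b d = 0"
  shows "b \<in> line a"
proof -
  obtain i where ai: "a i \<noteq> 0" using a by (auto simp: fun_eq_iff)
  have all: "b j = (b i / a i) * a j" for j
  proof (cases "j = i")
    case True thus ?thesis using ai by simp
  next
    case False
    define d where "d = (\<lambda>k. if k = j then a i else 0) + (\<lambda>k. if k = i then - a j else (0::'a))"
    have "pair a d = a j * a i + a i * (- a j)" unfolding d_def pair_addR pair_delta by simp
    hence "pair a d = 0" by (simp add: mult.commute)
    hence "pair b d = 0" using k by blast
    hence "b j * a i + b i * (- a j) = 0" unfolding d_def pair_addR pair_delta .
    thus ?thesis using ai by (simp add: field_simps)
  qed
  have "b = (\<lambda>j. (b i / a i) * a j)" by (rule ext) (rule all)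
  thus ?thesis by (rule in_lineI)
qed

lemma exists_ker:
  fixes a b :: "'n::finite \<Rightarrow> 'a::field"
  assumes "a \<noteq> 0" "b \<notin> line a"
  shows "\<exists>d. pair a d = 0 \<and> pair b d \<noteq> 0"
  using kernel_line assms by blast

lemma exists_ker_nonzero:
  fixes v :: "'n::finite \<Rightarrow> 'a::field"
  assumes "v \<noteq> 0" "card (UNIV :: 'n set) \<ge> 2"
  shows "\<exists>d. d \<noteq> 0 \<and> pair v d = 0"
proof -
  obtain i where vi: "v i \<noteq> 0" using assms by (auto simp: fun_eq_iff)
  have "\<exists>j. j \<noteq> i"
  proof (rule ccontr)
    assume "\<not> ?thesis"
    hence "(UNIV :: 'n set) = {i}" by auto
    hence "card (UNIV :: 'n set) = card {i}" by (rule arg_cong)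
    hence "card (UNIV :: 'n set) = 1" by simp
    thus False using assms(2) by linarith
  qed
  then obtain j where ji: "j \<noteq> i" by blast
  define d where "d = (\<lambda>k. if k = j then v i else 0) + (\<lambda>k. if k = i then - v j else (0::'a))"
  have "pair v d = v j * v i + v i * (- v j)" unfolding d_def pair_addR pair_delta by simp
  hence "pair v d = 0" by (simp add: mult.commute)
  moreover have "d j \<noteq> 0" using ji vi by (simp add: d_def)
  hence "d \<noteq> 0" by auto
  ultimately show ?thesis by blast
qed

lemma not_in_line:
  fixes \<Gamma> :: "('n::finite \<Rightarrow> 'a::field) set"
  assumes "nondeg \<Gamma>" "card (UNIV :: 'n set) \<ge> 2"
  shows "\<exists>e\<in>\<Gamma>. e \<notin> line v"
proof (rule ccontr)
  assume "\<not> ?thesis"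
  hence sub: "\<Gamma> \<subseteq> line v" by auto
  show False
  proof (cases "v = 0")
    case True
    hence "\<forall>\<alpha>\<in>\<Gamma>. \<alpha> = 0" using sub line_zero by blast
    hence "\<forall>\<alpha>\<in>\<Gamma>. pair \<alpha> 1 = 0" by auto
    hence "(1::'n\<Rightarrow>'a) = 0" using assms(1) unfolding nondeg_def by blast
    thus False by (metis one_neq_zero zero_fun_def one_fun_def)
  next
    case False
    then obtain d where d: "d \<noteq> 0" "pair v d = 0" using exists_ker_nonzero assms(2) by blast
    have "\<forall>\<alpha>\<in>\<Gamma>. pair \<alpha> d = 0" using sub d(2) by (auto elim!: in_lineE simp: pair_scaleL)
    thus False using assms(1) d(1) unfolding nondeg_def by blast
  qed
qed

lemma line_diff: assumes "x \<in> line v" "y \<in> line v" shows "x - y \<in> line v"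
proof -
  obtain c1 where 1: "x = (\<lambda>i. c1 * v i)" using assms(1) by (rule in_lineE)
  obtain c2 where 2: "y = (\<lambda>i. c2 * v i)" using assms(2) by (rule in_lineE)
  show ?thesis by (rule in_lineI[where c="c1 - c2"]) (simp add: 1 2 fun_eq_iff left_diff_distrib)
qed

lemma not_in_two_lines:
  fixes \<Gamma> :: "('n::finite \<Rightarrow> 'a::field) set"
  assumes "nondeg \<Gamma>" "card (UNIV :: 'n set) \<ge> 2" "add_subgroup \<Gamma>"
  shows "\<exists>e\<in>\<Gamma>. e \<notin> line v \<and> e \<notin> line w"
proof -
  obtain e where e: "e \<in> \<Gamma>" "e \<notin> line v" using not_in_line assms by blast
  obtain e' where e': "e' \<in> \<Gamma>" "e' \<notin> line w" using not_in_line assms by blast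
  show ?thesis
  proof (cases "e \<in> line w")
    case False thus ?thesis using e by blast
  next
    case ew: True
    show ?thesis
    proof (cases "e' \<in> line v")
      case False thus ?thesis using e' by blast
    next
      case True
      have "e + e' \<in> \<Gamma>" using e e' assms(3) unfolding add_subgroup_def by blast
      moreover have "e + e' \<notin> line v"
        using line_diff[of "e + e'" v e'] True e(2) by auto
      moreover have "e + e' \<notin> line w"
        using line_diff[of "e + e'" w e] ew e'(2) by auto
      ultimately show ?thesis by blast
    qed
  qed
qed

lemma avoid_two:
  fixes a u w :: "'n::finite \<Rightarrow> 'a::field"
  assumes "a \<noteq> 0" "u \<notin> line a" "w \<notin> line a"
  shows "\<exists>d. pair a d = 0 \<and> pair u d \<noteq> 0 \<and> pair w d \<noteq> 0"
proof -
  obtain x where x: "pair a x = 0" "pair u x \<noteq> 0" using exists_ker assms by blast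
  obtain y where y: "pair a y = 0" "pair w y \<noteq> 0" using exists_ker assms by blast
  show ?thesis
  proof (cases "pair w x = 0")
    case False thus ?thesis using x by blast
  next
    case wx: True
    show ?thesis
    proof (cases "pair u y = 0")
      case False thus ?thesis using y by blast
    next
      case True
      have "pair a (x + y) = 0" "pair u (x + y) \<noteq> 0" "pair w (x + y) \<noteq> 0"
        using x y wx True by (simp_all add: pair_addR)
      thus ?thesis by blast
    qed
  qed
qed

lemma line_sym:
  fixes a u :: "'n::finite \<Rightarrow> 'a::field"
  assumes "u \<noteq> 0" "a \<notin> line u"
  shows "u \<notin> line a" "a \<noteq> 0"
proof -
  show "a \<noteq> 0" using assms zero_in_line by metis
  show "u \<notin> line a"
  proof
    assume "u \<in> line a"
    then obtain c where c: "u = (\<lambda>i. c * a i)" unfolding line_def by auto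
    have "c \<noteq> 0" using c assms(1) by auto
    hence "a = (\<lambda>i. (1/c) * u i)" using c by (auto simp: fun_eq_iff)
    thus False using assms(2) in_lineI by blast
  qed
qed

lemma indep:
  fixes x y :: "'n::finite \<Rightarrow> 'a::field"
  assumes "x \<noteq> 0" "y \<notin> line x" "\<forall>i. a * x i + b * y i = 0"
  shows "a = 0 \<and> b = 0"
proof -
  have b: "b = 0"
  proof (rule ccontr)
    assume "b \<noteq> 0"
    hence "y = (\<lambda>i. (- a / b) * x i)" using assms(3) by (auto simp: fun_eq_iff field_simps) (metis add.commute add_eq_0_iff mult.commute)
    thus False using assms(2) in_lineI by blast
  qed
  obtain i where xi: "x i \<noteq> 0" using assms(1) by (auto simp: fun_eq_iff)
  have "a * x i + b * y i = 0" using assms(3) by blast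
  hence "a * x i = 0" using b by simp
  thus ?thesis using b xi by simp
qed




definition vec :: "('n \<Rightarrow> 'a) \<Rightarrow> (('n \<Rightarrow> 'a) \<Rightarrow> 'a::field)" where
  "vec b = (\<lambda>g. if g = b then 1 else 0)"

definition closedV :: "('n::finite \<Rightarrow> 'a::field) set \<Rightarrow> ('n \<Rightarrow> 'a) \<Rightarrow> (('n \<Rightarrow> 'a) \<Rightarrow> 'a) set \<Rightarrow> bool" where
  "closedV G \<mu> V \<longleftrightarrow> V \<subseteq> modspace G \<and> (\<forall>f\<in>V. \<forall>g\<in>V. (\<lambda>b. f b + g b) \<in> V)
     \<and> (\<forall>a. \<forall>f\<in>V. (\<lambda>b. a * f b) \<in> V)
     \<and> (\<forall>\<alpha> d f. \<alpha> \<in> G \<longrightarrow> \<alpha> \<noteq> 0 \<longrightarrow> pair \<alpha> d = 0 \<longrightarrow> f \<in> V \<longrightarrow> act (cM \<mu>) \<alpha> d f \<in> V)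
     \<and> (\<forall>f\<in>V. \<forall>b. b + \<mu> = 0 \<longrightarrow> f b = 0)"

lemma sg_diff: "add_subgroup G \<Longrightarrow> a \<in> G \<Longrightarrow> b \<in> G \<Longrightarrow> a - b \<in> G"
  unfolding add_subgroup_def by (metis diff_conv_add_uminus)
lemma sg_add: "add_subgroup G \<Longrightarrow> a \<in> G \<Longrightarrow> b \<in> G \<Longrightarrow> a + b \<in> G"
  unfolding add_subgroup_def by blast
lemma sg_neg: "add_subgroup G \<Longrightarrow> a \<in> G \<Longrightarrow> - a \<in> G"
  unfolding add_subgroup_def by blast
lemma sg_zero: "add_subgroup G \<Longrightarrow> 0 \<in> G"
  unfolding add_subgroup_def by blast

lemma act_cM_ker: "pair \<alpha> d = 0 \<Longrightarrow> act (cM \<mu>) \<alpha> d f = (\<lambda>\<gamma>. pair (\<gamma> + \<mu>) d * f (\<gamma> - \<alpha>))"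
  unfolding act_def cM_def by (simp add: fun_eq_iff pair_add pair_diff)

lemma pow_op:
  fixes \<Gamma> :: "('n::finite \<Rightarrow> 'a::field_char_0) set"
  assumes cl: "closedV \<Gamma> \<mu> V" and sg: "add_subgroup \<Gamma>"
    and a: "\<alpha> \<in> \<Gamma>" "\<alpha> \<noteq> 0" "pair \<alpha> d = 0" and f: "f \<in> V" and k: "k = 2 \<or> k = 3"
  shows "(\<lambda>\<gamma>. pair (\<gamma> + \<mu>) d ^ k * f \<gamma>) \<in> V"
proof -
  have actV: "\<And>\<beta> g. \<beta> \<in> \<Gamma> \<Longrightarrow> \<beta> \<noteq> 0 \<Longrightarrow> pair \<beta> d = 0 \<Longrightarrow> g \<in> V \<Longrightarrow> act (cM \<mu>) \<beta> d g \<in> V"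
    using cl unfolding closedV_def by blast
  have p: "\<And>\<gamma>. pair (\<gamma> - \<alpha> + \<mu>) d = pair (\<gamma> + \<mu>) d"
    using a(3) by (simp add: pair_add pair_diff)
  have na: "- \<alpha> \<in> \<Gamma>" "- \<alpha> \<noteq> 0" "pair (- \<alpha>) d = 0" using sg a by (auto simp: sg_neg pair_minus)
  have aa1: "- (\<alpha> + \<alpha>) \<in> \<Gamma>" using sg_neg[OF sg sg_add[OF sg a(1) a(1)]] .
  have aa2: "pair (- (\<alpha> + \<alpha>)) d = 0" unfolding pair_minus pair_add a(3) by simp
  note aa = aa1 aa2
  have "- (\<alpha> + \<alpha>) \<noteq> 0"
  proof
    assume "- (\<alpha> + \<alpha>) = 0"
    hence "\<forall>i. \<alpha> i + \<alpha> i = 0" by (metis add.inverse_neutral minus_minus plus_fun_apply zero_fun_apply)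
    hence "\<forall>i. \<alpha> i = 0" by (metis mult_2 mult_eq_0_iff zero_neq_numeral)
    thus False using a(2) by (auto simp: fun_eq_iff)
  qed
  note aa = aa this
  show ?thesis using k
  proof
    assume k2: "k = 2"
    have "act (cM \<mu>) \<alpha> d (act (cM \<mu>) (- \<alpha>) d f) \<in> V"
      using actV[OF a] actV[OF na f] by blast
    also have "act (cM \<mu>) \<alpha> d (act (cM \<mu>) (- \<alpha>) d f) = (\<lambda>\<gamma>. pair (\<gamma> + \<mu>) d ^ k * f \<gamma>)"
      using a(3) na(3) k2 p by (simp add: act_cM_ker power2_eq_square mult.assoc)
    finally show ?thesis .
  next
    assume k3: "k = 3"
    have "act (cM \<mu>) \<alpha> d (act (cM \<mu>) \<alpha> d (act (cM \<mu>) (- (\<alpha> + \<alpha>)) d f)) \<in> V"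
      using actV[OF a] actV[OF aa(1) aa(3) aa(2) f] by blast
    also have "act (cM \<mu>) \<alpha> d (act (cM \<mu>) \<alpha> d (act (cM \<mu>) (- (\<alpha> + \<alpha>)) d f)) = (\<lambda>\<gamma>. pair (\<gamma> + \<mu>) d ^ k * f \<gamma>)"
      using a(3) aa(2) k3 p by (simp add: act_cM_ker power3_eq_cube algebra_simps)
    finally show ?thesis .
  qed
qed

lemma isolate:
  fixes \<Gamma> :: "('n::finite \<Rightarrow> 'a::field_char_0) set"
  assumes cl: "closedV \<Gamma> \<mu> V" and sg: "add_subgroup \<Gamma>" and nd: "nondeg \<Gamma>"
    and card: "card (UNIV :: 'n set) \<ge> 2"
  shows "f \<in> V \<Longrightarrow> f \<noteq> (\<lambda>_. 0) \<Longrightarrow> \<exists>\<beta>\<in>\<Gamma>. \<beta> + \<mu> \<noteq> 0 \<and> vec \<beta> \<in> V"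
proof (induction "card {b. f b \<noteq> 0}" arbitrary: f rule: less_induct)
  case less
  define S where "S = {b. f b \<noteq> 0}"
  have fin: "finite S" and SG: "S \<subseteq> \<Gamma>" using less.prems cl unfolding closedV_def modspace_def S_def by auto
  have vanish: "\<And>b. b + \<mu> = 0 \<Longrightarrow> f b = 0" using cl less.prems unfolding closedV_def by blast
  have add: "\<And>g h. g \<in> V \<Longrightarrow> h \<in> V \<Longrightarrow> (\<lambda>b. g b + h b) \<in> V"
   and sc: "\<And>a g. g \<in> V \<Longrightarrow> (\<lambda>b. a * g b) \<in> V" using cl unfolding closedV_def by blast+
  obtain \<beta>1 where b1: "f \<beta>1 \<noteq> 0" using less.prems by (auto simp: fun_eq_iff)
  have b1S: "\<beta>1 \<in> S" using b1 S_def by simp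
  show ?case
  proof (cases "S = {\<beta>1}")
    case True
    have "vec \<beta>1 = (\<lambda>b. (1 / f \<beta>1) * f b)"
      using True b1 unfolding vec_def S_def by (auto simp: fun_eq_iff)
    hence "vec \<beta>1 \<in> V" using sc[OF less.prems(1), of "1 / f \<beta>1"] by simp
    moreover have "\<beta>1 + \<mu> \<noteq> 0" using vanish b1 by blast
    ultimately show ?thesis using SG b1S by blast
  next
    case False
    then obtain \<beta>2 where b2: "\<beta>2 \<in> S" "\<beta>2 \<noteq> \<beta>1" using b1S by blast
    define u where "u = \<beta>1 + \<mu>"
    define x where "x = \<beta>1 - \<beta>2"
    have u0: "u \<noteq> 0" by (metis vanish b1 u_def)
    have x0: "x \<noteq> 0" using b2 x_def by simp
    obtain \<alpha> where al: "\<alpha> \<in> \<Gamma>" "\<alpha> \<notin> line u" "\<alpha> \<notin> line x"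
      using not_in_two_lines[OF nd card sg] by blast
    have "u \<notin> line \<alpha>" "x \<notin> line \<alpha>" "\<alpha> \<noteq> 0" using line_sym u0 x0 al by blast+
    then obtain d where d: "pair \<alpha> d = 0" "pair u d \<noteq> 0" "pair x d \<noteq> 0"
      using avoid_two by blast
    define a where "a = pair (\<beta>1 + \<mu>) d"
    define b where "b = pair (\<beta>2 + \<mu>) d"
    have a0: "a \<noteq> 0" using d u_def a_def by simp
    have ab: "a \<noteq> b" using d(3) unfolding x_def a_def b_def by (simp add: pair_add pair_diff)
    obtain k where k: "k = 2 \<or> k = 3" "a ^ k \<noteq> b ^ k"
    proof (cases "a ^ 2 = b ^ 2")
      case False thus ?thesis using that by blast
    next
      case True
      have "a ^ 3 \<noteq> b ^ 3"
      proof
        assume "a ^ 3 = b ^ 3"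
        hence "a * a ^ 2 = b * a ^ 2" using True by (simp add: power3_eq_cube power2_eq_square algebra_simps)
        thus False using a0 ab by simp
      qed
      thus ?thesis using that by blast
    qed
    define g where "g = (\<lambda>\<gamma>. pair (\<gamma> + \<mu>) d ^ k * f \<gamma> + (- (a ^ k)) * f \<gamma>)"
    have "g \<in> V" unfolding g_def
      by (rule add[OF pow_op[OF cl sg al(1) \<open>\<alpha> \<noteq> 0\<close> d(1) less.prems(1) k(1)] sc[OF less.prems(1)]])
    moreover have gS: "{b. g b \<noteq> 0} \<subseteq> S - {\<beta>1}" unfolding g_def S_def a_def by auto
    have "g \<beta>2 \<noteq> 0" using b2 k(2) unfolding g_def S_def b_def by auto
    hence "g \<noteq> (\<lambda>_. 0)" by (auto simp: fun_eq_iff)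
    moreover have "card {b. g b \<noteq> 0} < card {b. f b \<noteq> 0}"
      using gS fin b1S unfolding S_def[symmetric]
      by (meson Diff_subset card_Diff1_less le_less_trans card_mono finite_Diff)
    ultimately show ?thesis using less.hyps by blast
  qed
qed

lemma step:
  fixes \<Gamma> :: "('n::finite \<Rightarrow> 'a::field) set"
  assumes cl: "closedV \<Gamma> \<mu> V" and sg: "add_subgroup \<Gamma>"
    and bg: "\<beta> \<in> \<Gamma>" "\<gamma> \<in> \<Gamma>" "\<gamma> \<noteq> \<beta>" "\<beta> + \<mu> \<notin> line (\<gamma> - \<beta>)" and v: "vec \<beta> \<in> V"
  shows "vec \<gamma> \<in> V"
proof -
  have sc: "\<And>a g. g \<in> V \<Longrightarrow> (\<lambda>b. a * g b) \<in> V" using cl unfolding closedV_def by blast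
  have actV: "\<And>\<beta> d g. \<beta> \<in> \<Gamma> \<Longrightarrow> \<beta> \<noteq> 0 \<Longrightarrow> pair \<beta> d = 0 \<Longrightarrow> g \<in> V \<Longrightarrow> act (cM \<mu>) \<beta> d g \<in> V"
    using cl unfolding closedV_def by blast
  have a: "\<gamma> - \<beta> \<in> \<Gamma>" "\<gamma> - \<beta> \<noteq> 0" using sg_diff[OF sg] bg by auto
  then obtain d where d: "pair (\<gamma> - \<beta>) d = 0" "pair (\<beta> + \<mu>) d \<noteq> 0" using exists_ker bg(4) by blast
  have "act (cM \<mu>) (\<gamma> - \<beta>) d (vec \<beta>) \<in> V" using actV[OF a d(1) v] .
  also have "act (cM \<mu>) (\<gamma> - \<beta>) d (vec \<beta>) = (\<lambda>x. pair (\<beta> + \<mu>) d * vec \<gamma> x)"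
    unfolding act_cM_ker[OF d(1)]
  proof (rule ext)
    fix x
    show "pair (x + \<mu>) d * vec \<beta> (x - (\<gamma> - \<beta>)) = pair (\<beta> + \<mu>) d * vec \<gamma> x"
    proof (cases "x = \<gamma>")
      case True thus ?thesis using d(1) by (simp add: vec_def pair_add pair_diff)
    next
      case False
      hence "x - (\<gamma> - \<beta>) \<noteq> \<beta>" by (simp add: eq_diff_eq)
      thus ?thesis using False by (simp add: vec_def)
    qed
  qed
  finally have "(\<lambda>x. pair (\<beta> + \<mu>) d * vec \<gamma> x) \<in> V" .
  from sc[OF this, of "1 / pair (\<beta> + \<mu>) d"] show ?thesis using d(2) by simp
qed

lemma spread:
  fixes \<Gamma> :: "('n::finite \<Rightarrow> 'a::field) set"
  assumes cl: "closedV \<Gamma> \<mu> V" and sg: "add_subgroup \<Gamma>" and nd: "nondeg \<Gamma>"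
    and card: "card (UNIV :: 'n set) \<ge> 2"
    and bg: "\<beta> \<in> \<Gamma>" "\<beta> + \<mu> \<noteq> 0" "\<gamma> \<in> \<Gamma>" "\<gamma> + \<mu> \<noteq> 0" and v: "vec \<beta> \<in> V"
  shows "vec \<gamma> \<in> V"
proof (cases "\<gamma> = \<beta>")
  case True thus ?thesis using v by simp
next
  case ne: False
  show ?thesis
  proof (cases "\<beta> + \<mu> \<in> line (\<gamma> - \<beta>)")
    case False thus ?thesis using step[OF cl sg bg(1) bg(3) ne False v] by blast
  next
    case True
    then obtain c where c: "\<beta> + \<mu> = (\<lambda>i. c * (\<gamma> - \<beta>) i)" by (auto elim: in_lineE)
    define x where "x = \<gamma> - \<beta>"
    have x0: "x \<noteq> 0" using ne x_def by simp
    obtain e where e: "e \<in> \<Gamma>" "e \<notin> line x" using not_in_line[OF nd card] by blast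
    define \<delta> where "\<delta> = \<beta> + e"
    have dG: "\<delta> \<in> \<Gamma>" using sg_add[OF sg bg(1) e(1)] \<delta>_def by simp
    have cpt: "\<And>i. \<beta> i + \<mu> i = c * x i" using c x_def by (metis plus_fun_apply)
    have e0: "e \<noteq> 0" using e(2) zero_in_line by metis
    have dne: "\<delta> \<noteq> \<beta>" using e0 \<delta>_def by simp
    have l1: "\<beta> + \<mu> \<notin> line (\<delta> - \<beta>)"
    proof
      assume "\<beta> + \<mu> \<in> line (\<delta> - \<beta>)"
      then obtain t where t: "\<beta> + \<mu> = (\<lambda>i. t * (\<delta> - \<beta>) i)" by (auto elim: in_lineE)
      have "\<forall>i. c * x i + (- t) * e i = 0"
      proof
        fix i
        have "\<beta> i + \<mu> i = t * e i" using t \<delta>_def by (metis plus_fun_apply add_diff_cancel_left')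
        thus "c * x i + (- t) * e i = 0" using cpt[of i] by simp
      qed
      hence "c = 0" using indep[OF x0 e(2)] by blast
      hence "\<beta> + \<mu> = 0" using c by (simp add: fun_eq_iff)
      thus False using bg(2) by simp
    qed
    have l2: "\<delta> + \<mu> \<notin> line (\<gamma> - \<delta>)"
    proof
      assume "\<delta> + \<mu> \<in> line (\<gamma> - \<delta>)"
      then obtain t where t: "\<delta> + \<mu> = (\<lambda>i. t * (\<gamma> - \<delta>) i)" by (auto elim: in_lineE)
      have "\<forall>i. (c - t) * x i + (1 + t) * e i = 0"
      proof
        fix i
        have "(\<delta> + \<mu>) i = t * (\<gamma> - \<delta>) i" using t by simp
        hence "\<beta> i + e i + \<mu> i = t * (\<gamma> i - (\<beta> i + e i))" using \<delta>_def by simp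
        also have "\<gamma> i - (\<beta> i + e i) = x i - e i" using x_def by simp
        also have "\<beta> i + e i + \<mu> i = c * x i + e i" using cpt[of i] by (simp add: algebra_simps)
        finally have h1: "c * x i + e i = t * (x i - e i)" .
        have "(c - t) * x i + (1 + t) * e i = (c * x i + e i) - t * (x i - e i)" by (simp add: algebra_simps)
        thus "(c - t) * x i + (1 + t) * e i = 0" using h1 by simp
      qed
      hence ct: "c - t = 0" "1 + t = 0" using indep[OF x0 e(2)] by blast+
      have ctt: "c = t" using ct(1) by simp
      have c1: "c + 1 = 0" using ct(2) ctt by (simp add: add.commute)
      have "\<gamma> + \<mu> = 0"
      proof
        fix i
        have "\<gamma> i + \<mu> i = (\<beta> i + \<mu> i) + x i" using x_def by simp
        also have "\<dots> = (c + 1) * x i" using cpt[of i] by (simp add: algebra_simps)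
        also have "\<dots> = 0" using c1 by simp
        finally show "(\<gamma> + \<mu>) i = 0 i" by simp
      qed
      thus False using bg(4) by simp
    qed
    have gd: "\<gamma> \<noteq> \<delta>"
    proof
      assume "\<gamma> = \<delta>"
      hence "\<forall>i. 1 * x i + (- 1) * e i = 0" using x_def \<delta>_def by simp
      from indep[OF x0 e(2) this] show False by simp
    qed
    have "vec \<delta> \<in> V" using step[OF cl sg bg(1) dG dne l1 v] .
    thus ?thesis using step[OF cl sg dG bg(3) gd l2] by blast
  qed
qed

lemma span_in:
  assumes z: "(\<lambda>_. 0) \<in> V" and add: "\<And>g h. g \<in> V \<Longrightarrow> h \<in> V \<Longrightarrow> (\<lambda>b. g b + h b) \<in> V"
   and sc: "\<And>a g. g \<in> V \<Longrightarrow> (\<lambda>b. a * g b) \<in> V" and vB: "\<forall>\<beta>\<in>B. vec \<beta> \<in> V"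
  shows "finite S \<Longrightarrow> {b. f b \<noteq> 0} \<subseteq> S \<Longrightarrow> (\<forall>b. f b \<noteq> 0 \<longrightarrow> b \<in> B) \<Longrightarrow> f \<in> V"
proof (induction S arbitrary: f rule: finite_induct)
  case empty
  hence "f = (\<lambda>_. 0)" by (auto simp: fun_eq_iff)
  thus ?case using z by simp
next
  case (insert x S)
  define g where "g = f(x := 0)"
  have "g \<in> V" by (rule insert.IH) (use insert.prems in \<open>auto simp: g_def\<close>)
  show ?case
  proof (cases "f x = 0")
    case True
    hence "f = g" unfolding g_def by auto
    thus ?thesis using \<open>g \<in> V\<close> by simp
  next
    case False
    hence "vec x \<in> V" using insert.prems vB by blast
    hence "(\<lambda>b. g b + f x * vec x b) \<in> V" using add sc \<open>g \<in> V\<close> by blast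
    moreover have "(\<lambda>b. g b + f x * vec x b) = f" unfolding g_def vec_def by auto
    ultimately show ?thesis by simp
  qed
qed

lemma span_sub:
  assumes z: "(\<lambda>_. 0) \<in> V" and add: "\<And>g h. g \<in> V \<Longrightarrow> h \<in> V \<Longrightarrow> (\<lambda>b. g b + h b) \<in> V"
   and sc: "\<And>a g. g \<in> V \<Longrightarrow> (\<lambda>b. a * g b) \<in> V" and vB: "\<forall>\<beta>\<in>B. vec \<beta> \<in> V"
  shows "span_of G B \<subseteq> V"
proof
  fix f assume "f \<in> span_of G B"
  hence "finite {b. f b \<noteq> 0}" "\<forall>b. f b \<noteq> 0 \<longrightarrow> b \<in> B" unfolding span_of_def modspace_def by auto
  thus "f \<in> V" using span_in[OF z add sc vB] by blast
qed




lemma plus_eq0: "(x + \<mu> = (0::'b::ab_group_add)) = (x = - \<mu>)"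
  by (simp add: eq_neg_iff_add_eq_0)

lemma gens_iff: "(\<alpha>, d) \<in> gens G \<longleftrightarrow> \<alpha> \<in> G \<and> \<alpha> \<noteq> 0 \<and> pair \<alpha> d = 0"
  unfolding gens_def by simp

lemma submoduleI:
  assumes "W \<subseteq> modspace G" "(\<lambda>_. 0) \<in> W" "\<And>f g. f \<in> W \<Longrightarrow> g \<in> W \<Longrightarrow> (\<lambda>b. f b + g b) \<in> W"
    "\<And>a f. f \<in> W \<Longrightarrow> (\<lambda>b. a * f b) \<in> W"
    "\<And>\<alpha> d f. \<alpha> \<in> G \<Longrightarrow> \<alpha> \<noteq> 0 \<Longrightarrow> pair \<alpha> d = 0 \<Longrightarrow> f \<in> W \<Longrightarrow> act c \<alpha> d f \<in> W"
  shows "submodule G c W"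
  using assms unfolding submodule_def gens_def by auto

lemma submoduleD:
  assumes "submodule G c W"
  shows "W \<subseteq> modspace G" "(\<lambda>_. 0) \<in> W" "\<And>f g. f \<in> W \<Longrightarrow> g \<in> W \<Longrightarrow> (\<lambda>b. f b + g b) \<in> W"
    "\<And>a f. f \<in> W \<Longrightarrow> (\<lambda>b. a * f b) \<in> W"
    "\<And>\<alpha> d f. \<alpha> \<in> G \<Longrightarrow> \<alpha> \<noteq> 0 \<Longrightarrow> pair \<alpha> d = 0 \<Longrightarrow> f \<in> W \<Longrightarrow> act c \<alpha> d f \<in> W"
  using assms unfolding submodule_def gens_def by auto

lemma modspace_add: "f \<in> modspace G \<Longrightarrow> g \<in> modspace G \<Longrightarrow> (\<lambda>b. f b + g b) \<in> modspace G"
proof -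
  assume a: "f \<in> modspace G" "g \<in> modspace G"
  have s: "{b. f b + g b \<noteq> 0} \<subseteq> {b. f b \<noteq> 0} \<union> {b. g b \<noteq> 0}" by auto
  have "finite {b. f b \<noteq> 0}" "finite {b. g b \<noteq> 0}" using a unfolding modspace_def by auto
  hence "finite {b. f b + g b \<noteq> 0}" using finite_subset[OF s] finite_UnI by blast
  thus ?thesis using a s unfolding modspace_def by blast
qed

lemma modspace_scale: "f \<in> modspace G \<Longrightarrow> (\<lambda>b. a * f b) \<in> modspace G"
proof -
  assume a: "f \<in> modspace G"
  have s: "{b. a * f b \<noteq> 0} \<subseteq> {b. f b \<noteq> 0}" by auto
  have "finite {b. f b \<noteq> 0}" using a unfolding modspace_def by auto
  hence "finite {b. a * f b \<noteq> 0}" using finite_subset[OF s] by blast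
  thus ?thesis using a s unfolding modspace_def by blast
qed

lemma modspace_zero: "(\<lambda>_. 0) \<in> modspace G"
  unfolding modspace_def by simp

lemma modspace_act:
  assumes sg: "add_subgroup G" and a: "\<alpha> \<in> G" and f: "f \<in> modspace G"
  shows "act c \<alpha> d f \<in> modspace G"
proof -
  have sub: "{b. act c \<alpha> d f b \<noteq> 0} \<subseteq> (\<lambda>x. x + \<alpha>) ` {b. f b \<noteq> 0}"
  proof
    fix b assume "b \<in> {b. act c \<alpha> d f b \<noteq> 0}"
    hence "f (b - \<alpha>) \<noteq> 0" unfolding act_def by auto
    moreover have "b = (b - \<alpha>) + \<alpha>" by simp
    ultimately show "b \<in> (\<lambda>x. x + \<alpha>) ` {b. f b \<noteq> 0}" by blast
  qed
  have "finite {b. f b \<noteq> 0}" using f unfolding modspace_def by auto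
  hence "finite {b. act c \<alpha> d f b \<noteq> 0}" using finite_subset[OF sub] finite_imageI by blast
  moreover have "{b. act c \<alpha> d f b \<noteq> 0} \<subseteq> G" using sub f sg_add[OF sg _ a] unfolding modspace_def by auto
  ultimately show ?thesis unfolding modspace_def by simp
qed

lemma modspace_sub: "add_subgroup G \<Longrightarrow> submodule G c (modspace G)"
  by (rule submoduleI) (auto simp: modspace_add modspace_scale modspace_zero modspace_act)

lemma span_of_iff: "f \<in> span_of G B \<longleftrightarrow> f \<in> modspace G \<and> (\<forall>\<beta>. \<beta> \<notin> B \<longrightarrow> f \<beta> = 0)"
  unfolding span_of_def by simp

lemma span_add: "f \<in> span_of G B \<Longrightarrow> g \<in> span_of G B \<Longrightarrow> (\<lambda>b. f b + g b) \<in> span_of G B"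
  unfolding span_of_def by (auto simp: modspace_add)
lemma span_scale: "f \<in> span_of G B \<Longrightarrow> (\<lambda>b. a * f b) \<in> span_of G B"
  unfolding span_of_def by (auto simp: modspace_scale)
lemma span_zero: "(\<lambda>_. 0) \<in> span_of G B"
  unfolding span_of_def by (auto simp: modspace_zero)

lemma vec_modspace: "\<beta> \<in> G \<Longrightarrow> vec \<beta> \<in> modspace G"
  unfolding modspace_def vec_def by auto
lemma vec_span: "\<beta> \<in> G \<Longrightarrow> \<beta> \<in> B \<Longrightarrow> vec \<beta> \<in> span_of G B"
  unfolding span_of_def using vec_modspace by (auto simp: vec_def)
lemma vec_nz: "vec \<beta> \<noteq> (\<lambda>_. 0)"
  unfolding vec_def by (auto simp: fun_eq_iff)

lemma span_all: "span_of G G = modspace G"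
  unfolding span_of_def modspace_def by auto

lemma nonzero_elem: "submodule G c U \<Longrightarrow> U \<noteq> {\<lambda>_. 0} \<Longrightarrow> \<exists>f\<in>U. \<exists>b. f b \<noteq> 0"
proof -
  assume "submodule G c U" "U \<noteq> {\<lambda>_. 0}"
  moreover have "(\<lambda>_. 0) \<in> U" using submoduleD(2) calculation(1) .
  ultimately obtain f where "f \<in> U" "f \<noteq> (\<lambda>_. 0)" by blast
  thus ?thesis by (auto simp: fun_eq_iff)
qed

lemma core_W:
  fixes \<Gamma> :: "('n::finite \<Rightarrow> 'a::field_char_0) set"
  assumes sg: "add_subgroup \<Gamma>" and nd: "nondeg \<Gamma>" and card: "card (UNIV :: 'n set) \<ge> 2"
    and sub: "submodule \<Gamma> c W"
    and H1: "\<And>\<alpha> d \<beta>. \<alpha> \<in> \<Gamma> \<Longrightarrow> \<alpha> \<noteq> 0 \<Longrightarrow> pair \<alpha> d = 0 \<Longrightarrow> \<beta> + \<mu> \<noteq> 0 \<Longrightarrow> \<alpha> + \<beta> + \<mu> \<noteq> 0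
               \<Longrightarrow> c \<alpha> d \<beta> = pair (\<beta> + \<mu>) d"
    and H2: "\<And>\<alpha> d f. \<alpha> \<in> \<Gamma> \<Longrightarrow> \<alpha> \<noteq> 0 \<Longrightarrow> pair \<alpha> d = 0 \<Longrightarrow> f \<in> W \<Longrightarrow> c \<alpha> d (- \<mu>) * f (- \<mu>) = 0"
    and f: "f \<in> W" "f \<beta>0 \<noteq> 0" "\<beta>0 + \<mu> \<noteq> 0" and g: "\<gamma> \<in> \<Gamma>" "\<gamma> + \<mu> \<noteq> 0"
  shows "\<exists>g\<in>W. \<forall>x. x + \<mu> \<noteq> 0 \<longrightarrow> g x = vec \<gamma> x"
proof -
  define R where "R = (\<lambda>g::('n \<Rightarrow> 'a) \<Rightarrow> 'a. (\<lambda>x. if x + \<mu> = 0 then 0 else g x))"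
  define V where "V = R ` W"
  note W = submoduleD[OF sub]
  have Rms: "R h \<in> modspace \<Gamma>" if "h \<in> modspace \<Gamma>" for h
  proof -
    have s: "{b. R h b \<noteq> 0} \<subseteq> {b. h b \<noteq> 0}" unfolding R_def by auto
    have "finite {b. h b \<noteq> 0}" using that unfolding modspace_def by auto
    hence "finite {b. R h b \<noteq> 0}" using finite_subset[OF s] by blast
    thus ?thesis using that s unfolding modspace_def by blast
  qed
  have Ract: "act (cM \<mu>) \<alpha> d (R h) = R (act c \<alpha> d h)"
    if a: "\<alpha> \<in> \<Gamma>" "\<alpha> \<noteq> 0" "pair \<alpha> d = 0" and h: "h \<in> W" for \<alpha> d h
  proof (rule ext)
    fix x
    show "act (cM \<mu>) \<alpha> d (R h) x = R (act c \<alpha> d h) x"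
    proof (cases "x + \<mu> = 0")
      case True
      have xe: "x - \<alpha> + \<mu> = - \<alpha>" using True by (simp add: algebra_simps)
      have "pair (x - \<alpha> + \<mu>) d = 0" unfolding xe pair_minus a(3) by simp
      thus ?thesis using True unfolding act_def cM_def R_def by simp
    next
      case xn: False
      show ?thesis
      proof (cases "x - \<alpha> + \<mu> = 0")
        case True
        hence "x - \<alpha> = - \<mu>" by (simp add: plus_eq0)
        thus ?thesis using xn True H2[OF a h] unfolding act_def cM_def R_def by simp
      next
        case False
        have "\<alpha> + (x - \<alpha>) + \<mu> \<noteq> 0" using xn by simp
        hence "c \<alpha> d (x - \<alpha>) = pair (x - \<alpha> + \<mu>) d" using H1[OF a False] by blast
        thus ?thesis using xn False unfolding act_def cM_def R_def by simp
      qed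
    qed
  qed
  have cl: "closedV \<Gamma> \<mu> V"
    unfolding closedV_def
  proof (intro conjI allI ballI impI)
    show "V \<subseteq> modspace \<Gamma>" unfolding V_def using Rms W(1) by auto
  next
    fix f g assume "f \<in> V" "g \<in> V"
    then obtain f' g' where "f' \<in> W" "g' \<in> W" "f = R f'" "g = R g'" unfolding V_def by auto
    moreover have "(\<lambda>b. R f' b + R g' b) = R (\<lambda>b. f' b + g' b)" unfolding R_def by auto
    ultimately show "(\<lambda>b. f b + g b) \<in> V" unfolding V_def using W(3) by auto
  next
    fix a f assume "f \<in> V"
    then obtain f' where "f' \<in> W" "f = R f'" unfolding V_def by auto
    moreover have "(\<lambda>b. a * R f' b) = R (\<lambda>b. a * f' b)" unfolding R_def by auto
    ultimately show "(\<lambda>b. a * f b) \<in> V" unfolding V_def using W(4) by auto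
  next
    fix \<alpha> d f assume "\<alpha> \<in> \<Gamma>" "\<alpha> \<noteq> 0" "pair \<alpha> d = 0" "f \<in> V"
    moreover then obtain f' where "f' \<in> W" "f = R f'" unfolding V_def by auto
    ultimately show "act (cM \<mu>) \<alpha> d f \<in> V" unfolding V_def using Ract W(5) by auto
  next
    fix f b assume "f \<in> V" "b + \<mu> = 0"
    thus "f b = 0" unfolding V_def R_def by auto
  qed
  have "R f \<in> V" using f(1) V_def by simp
  moreover have "R f \<noteq> (\<lambda>_. 0)" using f(2,3) unfolding R_def by (auto simp: fun_eq_iff)
  ultimately obtain \<beta> where b: "\<beta> \<in> \<Gamma>" "\<beta> + \<mu> \<noteq> 0" "vec \<beta> \<in> V"
    using isolate[OF cl sg nd card] by blast
  have "vec \<gamma> \<in> V" using spread[OF cl sg nd card b(1,2) g b(3)] .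
  then obtain h where h: "h \<in> W" "vec \<gamma> = R h" unfolding V_def by auto
  have "\<forall>x. x + \<mu> \<noteq> 0 \<longrightarrow> h x = vec \<gamma> x" using h(2) unfolding R_def by (auto simp: fun_eq_iff)
  thus ?thesis using h(1) by blast
qed

lemma submodule_inter:
  assumes "submodule G c U" "submodule G c W"
  shows "submodule G c (U \<inter> W)"
  using submoduleD[OF assms(1)] submoduleD[OF assms(2)] by (intro submoduleI) auto

lemma exists_ne:
  fixes \<Gamma> :: "('n::finite \<Rightarrow> 'a::field) set"
  assumes nd: "nondeg \<Gamma>" and card: "card (UNIV :: 'n set) \<ge> 2"
  shows "\<exists>\<epsilon>\<in>\<Gamma>. \<epsilon> \<noteq> - \<mu>"
proof -
  obtain e where e: "e \<in> \<Gamma>" "e \<notin> line \<mu>" using not_in_line[OF nd card] by blast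
  have m: "- \<mu> \<in> line \<mu>" by (rule in_lineI[where c="-1"]) (simp add: fun_eq_iff)
  have "e \<noteq> - \<mu>"
  proof
    assume "e = - \<mu>" thus False using e(2) m by simp
  qed
  thus ?thesis using e(1) by blast
qed

lemma irr_N:
  fixes \<Gamma> :: "('n::finite \<Rightarrow> 'a::field_char_0) set"
  assumes sg: "add_subgroup \<Gamma>" and nd: "nondeg \<Gamma>" and card: "card (UNIV :: 'n set) \<ge> 2"
    and subN: "submodule \<Gamma> c (span_of \<Gamma> (\<Gamma> - {- \<mu>}))"
    and H1: "\<And>\<alpha> d \<beta>. \<alpha> \<in> \<Gamma> \<Longrightarrow> \<alpha> \<noteq> 0 \<Longrightarrow> pair \<alpha> d = 0 \<Longrightarrow> \<beta> + \<mu> \<noteq> 0 \<Longrightarrow> \<alpha> + \<beta> + \<mu> \<noteq> 0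
               \<Longrightarrow> c \<alpha> d \<beta> = pair (\<beta> + \<mu>) d"
  shows "irreducible_sub \<Gamma> c (span_of \<Gamma> (\<Gamma> - {- \<mu>}))"
proof -
  let ?N = "span_of \<Gamma> (\<Gamma> - {- \<mu>})"
  obtain \<epsilon> where e: "\<epsilon> \<in> \<Gamma>" "\<epsilon> \<noteq> - \<mu>" using exists_ne[OF nd card] by blast
  have "vec \<epsilon> \<in> ?N" by (rule vec_span) (use e in auto)
  hence nz: "?N \<noteq> {\<lambda>_. 0}" using vec_nz by blast
  have "U = ?N" if U: "submodule \<Gamma> c U" "U \<subseteq> ?N" "U \<noteq> {\<lambda>_. 0}" for U
  proof
    show "U \<subseteq> ?N" using U by simp
    obtain f b0 where f: "f \<in> U" "f b0 \<noteq> 0" using nonzero_elem[OF U(1,3)] by blast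
    have fN: "f \<in> ?N" using f U(2) by blast
    hence b0: "b0 + \<mu> \<noteq> 0" using f(2) by (auto simp: span_of_iff plus_eq0)
    have H2: "c \<alpha> d (- \<mu>) * g (- \<mu>) = 0" if "g \<in> U" for \<alpha> d g
      using that U(2) by (auto simp: span_of_iff)
    have "vec \<gamma> \<in> U" if g: "\<gamma> \<in> \<Gamma> - {- \<mu>}" for \<gamma>
    proof -
      have g': "\<gamma> \<in> \<Gamma>" "\<gamma> + \<mu> \<noteq> 0" using g by (auto simp: plus_eq0)
      have "\<exists>h\<in>U. \<forall>x. x + \<mu> \<noteq> 0 \<longrightarrow> h x = vec \<gamma> x"
        by (rule core_W[OF sg nd card U(1) _ _ f b0 g']) ((rule H1; assumption), (rule H2; assumption))
      then obtain h where h: "h \<in> U" "\<forall>x. x + \<mu> \<noteq> 0 \<longrightarrow> h x = vec \<gamma> x" by blast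
      have "h (- \<mu>) = 0" using h(1) U(2) by (auto simp: span_of_iff)
      have "h = vec \<gamma>"
      proof
        fix x show "h x = vec \<gamma> x"
        proof (cases "x = - \<mu>")
          case True thus ?thesis using \<open>h (- \<mu>) = 0\<close> g by (auto simp: vec_def)
        next
          case False thus ?thesis using h(2) by (simp add: plus_eq0)
        qed
      qed
      thus ?thesis using h(1) by simp
    qed
    thus "?N \<subseteq> U" using span_sub[OF submoduleD(2-4)[OF U(1)]] by blast
  qed
  thus ?thesis unfolding irreducible_sub_def using subN nz by blast
qed




lemma partMa:
  fixes \<Gamma> :: "('n::finite \<Rightarrow> 'a::field_char_0) set"
  assumes sg: "add_subgroup \<Gamma>" and nd: "nondeg \<Gamma>" and card: "card (UNIV :: 'n set) \<ge> 2"
    and mu: "\<mu> \<notin> \<Gamma>"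
  shows "irreducible_mod \<Gamma> (cM \<mu>)"
proof -
  have sub: "submodule \<Gamma> (cM \<mu>) (modspace \<Gamma>)" using modspace_sub[OF sg] .
  have nz: "modspace \<Gamma> \<noteq> {\<lambda>_. 0}" using vec_modspace[OF sg_zero[OF sg]] vec_nz by blast
  have nm: "x + \<mu> \<noteq> 0" if "x \<in> \<Gamma>" for x
  proof
    assume "x + \<mu> = 0"
    hence "\<mu> = - x" by (simp add: add_eq_0_iff)
    thus False using mu sg_neg[OF sg that] by simp
  qed
  have H1: "\<And>\<alpha> d \<beta>. \<alpha> \<in> \<Gamma> \<Longrightarrow> \<alpha> \<noteq> 0 \<Longrightarrow> pair \<alpha> d = 0 \<Longrightarrow> \<beta> + \<mu> \<noteq> 0 \<Longrightarrow> \<alpha> + \<beta> + \<mu> \<noteq> 0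
               \<Longrightarrow> cM \<mu> \<alpha> d \<beta> = pair (\<beta> + \<mu>) d" unfolding cM_def by simp
  have "U = modspace \<Gamma>" if U: "submodule \<Gamma> (cM \<mu>) U" "U \<subseteq> modspace \<Gamma>" "U \<noteq> {\<lambda>_. 0}" for U
  proof
    show "U \<subseteq> modspace \<Gamma>" using U by simp
    obtain f b0 where f: "f \<in> U" "f b0 \<noteq> 0" using nonzero_elem[OF U(1,3)] by blast
    have "b0 \<in> \<Gamma>" using f U(2) unfolding modspace_def by auto
    hence b0: "b0 + \<mu> \<noteq> 0" using nm by blast
    have H2: "\<And>\<alpha> d g. \<alpha> \<in> \<Gamma> \<Longrightarrow> \<alpha> \<noteq> 0 \<Longrightarrow> pair \<alpha> d = 0 \<Longrightarrow> g \<in> U \<Longrightarrow> cM \<mu> \<alpha> d (- \<mu>) * g (- \<mu>) = 0"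
      unfolding cM_def by simp
    have "vec \<gamma> \<in> U" if g: "\<gamma> \<in> \<Gamma>" for \<gamma>
    proof -
      have "\<exists>h\<in>U. \<forall>x. x + \<mu> \<noteq> 0 \<longrightarrow> h x = vec \<gamma> x"
        by (rule core_W[OF sg nd card U(1) _ _ f(1) f(2) b0 g nm[OF g]]) (simp_all add: cM_def)
      then obtain h where h: "h \<in> U" "\<forall>x. x + \<mu> \<noteq> 0 \<longrightarrow> h x = vec \<gamma> x" by blast
      have "h = vec \<gamma>"
      proof
        fix x show "h x = vec \<gamma> x"
        proof (cases "x + \<mu> = 0")
          case True
          hence "x \<notin> \<Gamma>" using nm by blast
          hence "h x = 0" "x \<noteq> \<gamma>" using h(1) U(2) g unfolding modspace_def by auto
          thus ?thesis unfolding vec_def by simp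
        qed (use h(2) in blast)
      qed
      thus ?thesis using h(1) by simp
    qed
    hence "span_of \<Gamma> \<Gamma> \<subseteq> U" using span_sub[OF submoduleD(2-4)[OF U(1)]] by blast
    thus "modspace \<Gamma> \<subseteq> U" unfolding span_all .
  qed
  thus ?thesis unfolding irreducible_mod_def irreducible_sub_def using sub nz by blast
qed

lemma subN_M:
  assumes sg: "add_subgroup \<Gamma>"
  shows "submodule \<Gamma> (cM \<mu>) (span_of \<Gamma> (\<Gamma> - {- \<mu>}))"
proof (rule submoduleI)
  show "span_of \<Gamma> (\<Gamma> - {- \<mu>}) \<subseteq> modspace \<Gamma>" unfolding span_of_def by auto
next
  fix \<alpha> d f assume a: "\<alpha> \<in> \<Gamma>" "\<alpha> \<noteq> 0" "pair \<alpha> d = 0" and f: "f \<in> span_of \<Gamma> (\<Gamma> - {- \<mu>})"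
  have ms: "act (cM \<mu>) \<alpha> d f \<in> modspace \<Gamma>" using modspace_act[OF sg a(1)] f unfolding span_of_def by auto
  have "act (cM \<mu>) \<alpha> d f (- \<mu>) = 0"
  proof -
    have "- \<mu> - \<alpha> + \<mu> = - \<alpha>" by (simp add: algebra_simps)
    hence "pair (- \<mu> - \<alpha> + \<mu>) d = 0" using a(3) by (simp add: pair_minus)
    thus ?thesis unfolding act_def cM_def by simp
  qed
  moreover have "act (cM \<mu>) \<alpha> d f \<beta> = 0" if "\<beta> \<notin> \<Gamma>" for \<beta>
    using ms that unfolding modspace_def by auto
  ultimately show "act (cM \<mu>) \<alpha> d f \<in> span_of \<Gamma> (\<Gamma> - {- \<mu>})" using ms unfolding span_of_def by auto
qed (auto simp: span_add span_scale span_zero)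

lemma span_single_form:
  assumes "f \<in> span_of G {b}"
  shows "f = (\<lambda>x. f b * vec b x)"
proof (rule ext)
  fix x show "f x = f b * vec b x"
    by (cases "x = b") (use assms in \<open>auto simp: span_of_def vec_def\<close>)
qed

lemma irr_single:
  assumes sub: "submodule G c (span_of G {b})" and bG: "b \<in> G"
  shows "irreducible_sub G c (span_of G {b})"
proof -
  have v: "vec b \<in> span_of G {b}" using vec_span bG by blast
  hence nz: "span_of G {b} \<noteq> {\<lambda>_. 0}" using vec_nz by blast
  have "U = span_of G {b}" if U: "submodule G c U" "U \<subseteq> span_of G {b}" "U \<noteq> {\<lambda>_. 0}" for U
  proof
    show "U \<subseteq> span_of G {b}" using U by simp
    obtain f b0 where f: "f \<in> U" "f b0 \<noteq> 0" using nonzero_elem[OF U(1,3)] by blast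
    have ff: "f = (\<lambda>x. f b * vec b x)" using span_single_form f U(2) by blast
    hence fb: "f b \<noteq> 0" using f(2) by (metis mult_zero_left)
    have "(\<lambda>x. (1 / f b) * f x) \<in> U" using submoduleD(4)[OF U(1) f(1)] .
    also have "(\<lambda>x. (1 / f b) * f x) = vec b" using fb by (subst ff) (simp add: fun_eq_iff)
    finally have "vec b \<in> U" .
    thus "span_of G {b} \<subseteq> U" using span_sub[OF submoduleD(2-4)[OF U(1)]] by blast
  qed
  thus ?thesis unfolding irreducible_sub_def using sub nz by blast
qed

lemma act_single_zero:
  assumes "\<And>\<alpha> d. \<alpha> \<in> G \<Longrightarrow> \<alpha> \<noteq> 0 \<Longrightarrow> pair \<alpha> d = 0 \<Longrightarrow> c \<alpha> d b = 0"
    and "\<alpha> \<in> G" "\<alpha> \<noteq> 0" "pair \<alpha> d = 0" "f \<in> span_of G {b}"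
  shows "act c \<alpha> d f = (\<lambda>_. 0)"
proof
  fix x
  show "act c \<alpha> d f x = 0"
  proof (cases "x - \<alpha> = b")
    case True thus ?thesis using assms unfolding act_def by simp
  next
    case False thus ?thesis using assms(5) unfolding act_def span_of_def by auto
  qed
qed

lemma decomp:
  assumes "b \<in> G"
  shows "span_of G (G - {b}) \<inter> span_of G {b} = {\<lambda>_. 0}"
    "modspace G = {h. \<exists>f\<in>span_of G (G - {b}). \<exists>g\<in>span_of G {b}. h = (\<lambda>x. f x + g x)}"
proof -
  show "span_of G (G - {b}) \<inter> span_of G {b} = {\<lambda>_. 0}"
  proof
    show "span_of G (G - {b}) \<inter> span_of G {b} \<subseteq> {\<lambda>_. 0}"
    proof
      fix h assume h: "h \<in> span_of G (G - {b}) \<inter> span_of G {b}"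
      have "h x = 0" for x
      proof (cases "x = b")
        case True thus ?thesis using h by (simp add: span_of_iff)
      next
        case False thus ?thesis using h by (simp add: span_of_iff)
      qed
      thus "h \<in> {\<lambda>_. 0}" by auto
    qed
    show "{\<lambda>_. 0} \<subseteq> span_of G (G - {b}) \<inter> span_of G {b}" using span_zero by blast
  qed
  show "modspace G = {h. \<exists>f\<in>span_of G (G - {b}). \<exists>g\<in>span_of G {b}. h = (\<lambda>x. f x + g x)}"
  proof
    show "modspace G \<subseteq> {h. \<exists>f\<in>span_of G (G - {b}). \<exists>g\<in>span_of G {b}. h = (\<lambda>x. f x + g x)}"
    proof
      fix h assume h: "h \<in> modspace G"
      define f where "f = (\<lambda>x. if x = b then 0 else h x)"
      define g where "g = (\<lambda>x. if x = b then h x else 0)"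
      have "f = (\<lambda>x. 1 * h x + (- h b) * vec b x)" unfolding f_def vec_def by auto
      hence "f \<in> modspace G" using h modspace_add modspace_scale vec_modspace[OF assms] by metis
      moreover have "g = (\<lambda>x. h b * vec b x)" unfolding g_def vec_def by auto
      hence "g \<in> modspace G" using modspace_scale vec_modspace[OF assms] by metis
      moreover have hz: "\<forall>\<beta>. \<beta> \<notin> G \<longrightarrow> h \<beta> = 0" using h unfolding modspace_def by auto
      ultimately have "f \<in> span_of G (G - {b})" "g \<in> span_of G {b}" 
        unfolding span_of_iff f_def g_def by auto
      moreover have "h = (\<lambda>x. f x + g x)" unfolding f_def g_def by auto
      ultimately show "h \<in> {h. \<exists>f\<in>span_of G (G - {b}). \<exists>g\<in>span_of G {b}. h = (\<lambda>x. f x + g x)}" by blast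
    qed
  next
    show "{h. \<exists>f\<in>span_of G (G - {b}). \<exists>g\<in>span_of G {b}. h = (\<lambda>x. f x + g x)} \<subseteq> modspace G"
      unfolding span_of_def using modspace_add by blast
  qed
qed




lemma witness_eta:
  fixes \<Gamma> :: "('n::finite \<Rightarrow> 'a::field) set"
  assumes nd: "nondeg \<Gamma>" and card: "card (UNIV :: 'n set) \<ge> 2" and eta: "\<eta> \<noteq> 0"
  shows "\<exists>\<alpha>0 d0. \<alpha>0 \<in> \<Gamma> \<and> \<alpha>0 \<noteq> 0 \<and> pair \<alpha>0 d0 = 0 \<and> pair \<eta> d0 \<noteq> 0"
proof -
  obtain \<alpha>0 where a: "\<alpha>0 \<in> \<Gamma>" "\<alpha>0 \<notin> line \<eta>" using not_in_line[OF nd card] by blast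
  have "\<eta> \<notin> line \<alpha>0" "\<alpha>0 \<noteq> 0" using line_sym[OF eta a(2)] by auto
  then obtain d0 where "pair \<alpha>0 d0 = 0" "pair \<eta> d0 \<noteq> 0" using exists_ker by blast
  thus ?thesis using a(1) \<open>\<alpha>0 \<noteq> 0\<close> by blast
qed

lemma cA_shift0: "\<alpha> \<noteq> 0 \<Longrightarrow> pair \<alpha> d = 0 \<Longrightarrow> cA \<zeta> \<eta> \<alpha> d (- \<zeta> - \<alpha>) = 0"
proof -
  assume a: "\<alpha> \<noteq> 0" "pair \<alpha> d = 0"
  have ne: "- \<zeta> - \<alpha> \<noteq> - \<zeta>" using a(1) by simp
  have e: "- \<zeta> - \<alpha> + \<zeta> = - \<alpha>" by (simp add: algebra_simps)
  show ?thesis unfolding cA_def using ne by (simp only: if_False e pair_minus a(2)) simp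
qed

lemma subN_A:
  assumes sg: "add_subgroup \<Gamma>"
  shows "submodule \<Gamma> (cA \<zeta> \<eta>) (span_of \<Gamma> (\<Gamma> - {- \<zeta>}))"
proof (rule submoduleI)
  show "span_of \<Gamma> (\<Gamma> - {- \<zeta>}) \<subseteq> modspace \<Gamma>" unfolding span_of_def by auto
next
  fix \<alpha> d f assume a: "\<alpha> \<in> \<Gamma>" "\<alpha> \<noteq> 0" "pair \<alpha> d = 0" and f: "f \<in> span_of \<Gamma> (\<Gamma> - {- \<zeta>})"
  have ms: "act (cA \<zeta> \<eta>) \<alpha> d f \<in> modspace \<Gamma>" using modspace_act[OF sg a(1)] f unfolding span_of_def by auto
  have "act (cA \<zeta> \<eta>) \<alpha> d f (- \<zeta>) = 0"
    unfolding act_def using cA_shift0[OF a(2,3)] by simp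
  moreover have "act (cA \<zeta> \<eta>) \<alpha> d f \<beta> = 0" if "\<beta> \<notin> \<Gamma>" for \<beta>
    using ms that unfolding modspace_def by auto
  ultimately show "act (cA \<zeta> \<eta>) \<alpha> d f \<in> span_of \<Gamma> (\<Gamma> - {- \<zeta>})" using ms unfolding span_of_def by auto
qed (auto simp: span_add span_scale span_zero)

lemma partA:
  fixes \<Gamma> :: "('n::finite \<Rightarrow> 'a::field_char_0) set"
  assumes sg: "add_subgroup \<Gamma>" and nd: "nondeg \<Gamma>" and card: "card (UNIV :: 'n set) \<ge> 2"
    and z: "\<zeta> \<in> \<Gamma>" and eta: "\<eta> \<noteq> 0"
  shows "indecomposable_mod \<Gamma> (cA \<zeta> \<eta>) \<and> reducible_mod \<Gamma> (cA \<zeta> \<eta>)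
     \<and> irreducible_sub \<Gamma> (cA \<zeta> \<eta>) (span_of \<Gamma> (\<Gamma> - {- \<zeta>}))"
proof -
  let ?N = "span_of \<Gamma> (\<Gamma> - {- \<zeta>})"
  have irr: "irreducible_sub \<Gamma> (cA \<zeta> \<eta>) ?N"
    by (rule irr_N[OF sg nd card subN_A[OF sg]]) (auto simp: cA_def plus_eq0)
  have Nnz: "?N \<noteq> {\<lambda>_. 0}" using irr unfolding irreducible_sub_def by blast
  have zG: "- \<zeta> \<in> \<Gamma>" using sg_neg[OF sg z] .
  have vz: "vec (- \<zeta>) \<in> modspace \<Gamma>" "vec (- \<zeta>) \<notin> ?N"
    using vec_modspace[OF zG] by (auto simp: span_of_iff vec_def)
  have red: "reducible_mod \<Gamma> (cA \<zeta> \<eta>)"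
    unfolding reducible_mod_def using irr Nnz vz unfolding irreducible_sub_def by blast
  obtain \<alpha>0 d0 where w: "\<alpha>0 \<in> \<Gamma>" "\<alpha>0 \<noteq> 0" "pair \<alpha>0 d0 = 0" "pair \<eta> d0 \<noteq> 0"
    using witness_eta[OF nd card eta] by blast
  have key: "?N \<subseteq> U" if U: "submodule \<Gamma> (cA \<zeta> \<eta>) U" "U \<noteq> {\<lambda>_. 0}" for U
  proof -
    have si: "submodule \<Gamma> (cA \<zeta> \<eta>) (U \<inter> ?N)" using submodule_inter[OF U(1) subN_A[OF sg]] .
    have "U \<inter> ?N = {\<lambda>_. 0} \<or> U \<inter> ?N = ?N" using irr si unfolding irreducible_sub_def by blast
    moreover have "U \<inter> ?N \<noteq> {\<lambda>_. 0}"
    proof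
      assume I: "U \<inter> ?N = {\<lambda>_. 0}"
      obtain u b where u: "u \<in> U" "u b \<noteq> 0" using nonzero_elem[OF U] by blast
      have ums: "u \<in> modspace \<Gamma>" using u(1) submoduleD(1)[OF U(1)] by blast
      show False
      proof (cases "u (- \<zeta>) = 0")
        case True
        have "u \<in> ?N" unfolding span_of_iff using ums True unfolding modspace_def by auto
        hence "u = (\<lambda>_. 0)" using I u(1) by blast
        thus False using u(2) by simp
      next
        case False
        define w where "w = act (cA \<zeta> \<eta>) \<alpha>0 d0 u"
        have wU: "w \<in> U" unfolding w_def using submoduleD(5)[OF U(1) w(1-3) u(1)] .
        have wms: "w \<in> modspace \<Gamma>" using wU submoduleD(1)[OF U(1)] by blast
        have "w (- \<zeta>) = 0" unfolding w_def act_def using cA_shift0[OF w(2,3)] by simp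
        hence "w \<in> ?N" unfolding span_of_iff using wms unfolding modspace_def by auto
        hence w0: "w = (\<lambda>_. 0)" using I wU by blast
        have "\<alpha>0 - \<zeta> - \<alpha>0 = - \<zeta>" by (simp add: algebra_simps)
        hence "w (\<alpha>0 - \<zeta>) = pair \<eta> d0 * u (- \<zeta>)" unfolding w_def act_def cA_def by simp
        thus False using w0 w(4) False by simp
      qed
    qed
    ultimately show ?thesis by blast
  qed
  have msnz: "modspace \<Gamma> \<noteq> {\<lambda>_. 0}" using vz(1) vec_nz by blast
  have "\<not> (\<exists>U W. submodule \<Gamma> (cA \<zeta> \<eta>) U \<and> submodule \<Gamma> (cA \<zeta> \<eta>) W \<and> U \<noteq> {\<lambda>_. 0} \<and> W \<noteq> {\<lambda>_. 0}
           \<and> U \<inter> W = {\<lambda>_. 0} \<and> modspace \<Gamma> = {h. \<exists>f\<in>U. \<exists>g\<in>W. h = (\<lambda>b. f b + g b)})"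
  proof
    assume "\<exists>U W. submodule \<Gamma> (cA \<zeta> \<eta>) U \<and> submodule \<Gamma> (cA \<zeta> \<eta>) W \<and> U \<noteq> {\<lambda>_. 0} \<and> W \<noteq> {\<lambda>_. 0}
           \<and> U \<inter> W = {\<lambda>_. 0} \<and> modspace \<Gamma> = {h. \<exists>f\<in>U. \<exists>g\<in>W. h = (\<lambda>b. f b + g b)}"
    then obtain U W where UW: "submodule \<Gamma> (cA \<zeta> \<eta>) U" "submodule \<Gamma> (cA \<zeta> \<eta>) W" "U \<noteq> {\<lambda>_. 0}" "W \<noteq> {\<lambda>_. 0}"
      "U \<inter> W = {\<lambda>_. 0}" by blast
    have "?N \<subseteq> U \<inter> W" using key[OF UW(1,3)] key[OF UW(2,4)] by blast
    hence "?N \<subseteq> {\<lambda>_. 0}" using UW(5) by simp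
    moreover have "(\<lambda>_. 0) \<in> ?N" using span_zero by blast
    ultimately show False using Nnz by blast
  qed
  hence "indecomposable_mod \<Gamma> (cA \<zeta> \<eta>)" unfolding indecomposable_mod_def using msnz by blast
  thus ?thesis using red irr by blast
qed




lemma cB_at0: "\<alpha> \<noteq> 0 \<Longrightarrow> cB \<zeta> \<eta> \<alpha> d (- \<zeta>) = 0"
proof -
  assume a: "\<alpha> \<noteq> 0"
  have "- \<zeta> \<noteq> - \<alpha> - \<zeta>" using a by simp
  thus ?thesis unfolding cB_def by simp
qed

lemma subT_B:
  assumes sg: "add_subgroup \<Gamma>"
  shows "submodule \<Gamma> (cB \<zeta> \<eta>) (span_of \<Gamma> {- \<zeta>})"
    "\<And>\<alpha> d f. \<alpha> \<in> \<Gamma> \<Longrightarrow> \<alpha> \<noteq> 0 \<Longrightarrow> pair \<alpha> d = 0 \<Longrightarrow> f \<in> span_of \<Gamma> {- \<zeta>} \<Longrightarrow> act (cB \<zeta> \<eta>) \<alpha> d f = (\<lambda>_. 0)"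
proof -
  show act0: "\<And>\<alpha> d f. \<alpha> \<in> \<Gamma> \<Longrightarrow> \<alpha> \<noteq> 0 \<Longrightarrow> pair \<alpha> d = 0 \<Longrightarrow> f \<in> span_of \<Gamma> {- \<zeta>} \<Longrightarrow> act (cB \<zeta> \<eta>) \<alpha> d f = (\<lambda>_. 0)"
    by (rule act_single_zero) (auto simp: cB_at0)
  show "submodule \<Gamma> (cB \<zeta> \<eta>) (span_of \<Gamma> {- \<zeta>})"
  proof (rule submoduleI)
    show "span_of \<Gamma> {- \<zeta>} \<subseteq> modspace \<Gamma>" unfolding span_of_def by auto
  next
    fix \<alpha> d f assume "\<alpha> \<in> \<Gamma>" "\<alpha> \<noteq> 0" "pair \<alpha> d = 0" "f \<in> span_of \<Gamma> {- \<zeta>}"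
    thus "act (cB \<zeta> \<eta>) \<alpha> d f \<in> span_of \<Gamma> {- \<zeta>}" using act0 span_zero by metis
  qed (auto simp: span_add span_scale span_zero)
qed

lemma cB_H1: "\<beta> + \<zeta> \<noteq> 0 \<Longrightarrow> \<alpha> + \<beta> + \<zeta> \<noteq> 0 \<Longrightarrow> cB \<zeta> \<eta> \<alpha> d \<beta> = pair (\<beta> + \<zeta>) d"
proof -
  assume "\<alpha> + \<beta> + \<zeta> \<noteq> 0"
  hence "\<beta> \<noteq> - \<alpha> - \<zeta>" by (auto simp: algebra_simps)
  thus ?thesis unfolding cB_def by simp
qed

lemma partB:
  fixes \<Gamma> :: "('n::finite \<Rightarrow> 'a::field_char_0) set"
  assumes sg: "add_subgroup \<Gamma>" and nd: "nondeg \<Gamma>" and card: "card (UNIV :: 'n set) \<ge> 2"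
    and z: "\<zeta> \<in> \<Gamma>" and eta: "\<eta> \<noteq> 0"
  shows "indecomposable_mod \<Gamma> (cB \<zeta> \<eta>) \<and> reducible_mod \<Gamma> (cB \<zeta> \<eta>)
      \<and> irreducible_quot \<Gamma> (cB \<zeta> \<eta>) (span_of \<Gamma> {- \<zeta>})"
proof -
  let ?T = "span_of \<Gamma> {- \<zeta>}"
  note subT = subT_B[OF sg, of \<zeta> \<eta>]
  have zG: "- \<zeta> \<in> \<Gamma>" using sg_neg[OF sg z] .
  have vT: "vec (- \<zeta>) \<in> ?T" by (rule vec_span) (use zG in auto)
  hence Tnz: "?T \<noteq> {\<lambda>_. 0}" using vec_nz by blast
  obtain \<epsilon> where e: "\<epsilon> \<in> \<Gamma>" "\<epsilon> \<noteq> - \<zeta>" using exists_ne[OF nd card] by blast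
  have ve: "vec \<epsilon> \<in> modspace \<Gamma>" "vec \<epsilon> \<notin> ?T"
    using vec_modspace[OF e(1)] e(2) by (auto simp: span_of_iff vec_def)
  hence Tne: "?T \<noteq> modspace \<Gamma>" by blast
  have red: "reducible_mod \<Gamma> (cB \<zeta> \<eta>)" unfolding reducible_mod_def using subT(1) Tnz Tne by blast
  have H2: "\<And>\<alpha> d g. \<alpha> \<in> \<Gamma> \<Longrightarrow> \<alpha> \<noteq> 0 \<Longrightarrow> pair \<alpha> d = 0 \<Longrightarrow> g \<in> U \<Longrightarrow> cB \<zeta> \<eta> \<alpha> d (- \<zeta>) * g (- \<zeta>) = 0" for U
    by (simp add: cB_at0)
  have H1: "\<And>\<alpha> d \<beta>. \<alpha> \<in> \<Gamma> \<Longrightarrow> \<alpha> \<noteq> 0 \<Longrightarrow> pair \<alpha> d = 0 \<Longrightarrow> \<beta> + \<zeta> \<noteq> 0 \<Longrightarrow> \<alpha> + \<beta> + \<zeta> \<noteq> 0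
               \<Longrightarrow> cB \<zeta> \<eta> \<alpha> d \<beta> = pair (\<beta> + \<zeta>) d" by (rule cB_H1)
  have gen: "\<exists>h\<in>U. \<forall>x. x + \<zeta> \<noteq> 0 \<longrightarrow> h x = vec \<gamma> x"
    if U: "submodule \<Gamma> (cB \<zeta> \<eta>) U" and f: "f \<in> U" "f b0 \<noteq> 0" "b0 \<noteq> - \<zeta>"
      and g: "\<gamma> \<in> \<Gamma>" "\<gamma> \<noteq> - \<zeta>" for U f b0 \<gamma>
  proof -
    have b0: "b0 + \<zeta> \<noteq> 0" using f(3) by (simp add: plus_eq0)
    have g': "\<gamma> + \<zeta> \<noteq> 0" using g(2) by (simp add: plus_eq0)
    show ?thesis
      by (rule core_W[OF sg nd card U _ _ f(1) f(2) b0 g(1) g']) ((rule H1; assumption), (rule H2; assumption))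
  qed
  have quot: "irreducible_quot \<Gamma> (cB \<zeta> \<eta>) ?T"
    unfolding irreducible_quot_def
  proof (intro conjI allI impI)
    show "submodule \<Gamma> (cB \<zeta> \<eta>) ?T" using subT(1) .
    show "?T \<noteq> modspace \<Gamma>" using Tne .
  next
    fix W assume W: "submodule \<Gamma> (cB \<zeta> \<eta>) W \<and> ?T \<subseteq> W"
    show "W = ?T \<or> W = modspace \<Gamma>"
    proof (cases "W \<subseteq> ?T")
      case True thus ?thesis using W by blast
    next
      case False
      then obtain f where f: "f \<in> W" "f \<notin> ?T" by blast
      have fms: "f \<in> modspace \<Gamma>" using f(1) submoduleD(1) W by blast
      then obtain b0 where b0: "b0 \<noteq> - \<zeta>" "f b0 \<noteq> 0" using f(2) unfolding span_of_iff by auto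
      have "vec \<gamma> \<in> W" if g: "\<gamma> \<in> \<Gamma>" for \<gamma>
      proof (cases "\<gamma> = - \<zeta>")
        case True thus ?thesis using vT W by blast
      next
        case False
        obtain h where h: "h \<in> W" "\<forall>x. x + \<zeta> \<noteq> 0 \<longrightarrow> h x = vec \<gamma> x"
          using gen[OF conjunct1[OF W] f(1) b0(2) b0(1) g False] by blast
        have "(\<lambda>x. h x + (- h (- \<zeta>)) * vec (- \<zeta>) x) \<in> W"
          using submoduleD(3)[OF conjunct1[OF W] h(1) submoduleD(4)[OF conjunct1[OF W]]] vT W by blast
        moreover have "(\<lambda>x. h x + (- h (- \<zeta>)) * vec (- \<zeta>) x) = vec \<gamma>"
        proof
          fix x show "h x + (- h (- \<zeta>)) * vec (- \<zeta>) x = vec \<gamma> x"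
          proof (cases "x = - \<zeta>")
            case True thus ?thesis using False by (auto simp: vec_def)
          next
            case xn: False
            hence "x + \<zeta> \<noteq> 0" by (simp add: plus_eq0)
            thus ?thesis using h(2) xn by (simp add: vec_def)
          qed
        qed
        ultimately show ?thesis by simp
      qed
      hence "span_of \<Gamma> \<Gamma> \<subseteq> W" using span_sub[OF submoduleD(2-4)[OF conjunct1[OF W]]] by blast
      hence "W = modspace \<Gamma>" using submoduleD(1)[OF conjunct1[OF W]] unfolding span_all by blast
      thus ?thesis by blast
    qed
  qed
  obtain \<alpha>0 d0 where w: "\<alpha>0 \<in> \<Gamma>" "\<alpha>0 \<noteq> 0" "pair \<alpha>0 d0 = 0" "pair \<eta> d0 \<noteq> 0"
    using witness_eta[OF nd card eta] by blast
  have key: "vec (- \<zeta>) \<in> U" if U: "submodule \<Gamma> (cB \<zeta> \<eta>) U" "U \<noteq> {\<lambda>_. 0}" for U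
  proof -
    obtain u b where u: "u \<in> U" "u b \<noteq> 0" using nonzero_elem[OF U] by blast
    have ums: "u \<in> modspace \<Gamma>" using u(1) submoduleD(1)[OF U(1)] by blast
    show ?thesis
    proof (cases "\<forall>\<beta>. \<beta> \<noteq> - \<zeta> \<longrightarrow> u \<beta> = 0")
      case True
      hence uT: "u \<in> ?T" using ums unfolding span_of_iff by auto
      have ff: "u = (\<lambda>x. u (- \<zeta>) * vec (- \<zeta>) x)" using span_single_form[OF uT] .
      hence ub: "u (- \<zeta>) \<noteq> 0" using u(2) by (metis mult_zero_left)
      have "(\<lambda>x. (1 / u (- \<zeta>)) * u x) \<in> U" using submoduleD(4)[OF U(1) u(1)] .
      also have "(\<lambda>x. (1 / u (- \<zeta>)) * u x) = vec (- \<zeta>)" using ub by (subst ff) (simp add: fun_eq_iff)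
      finally show ?thesis .
    next
      case False
      then obtain b0 where b0: "b0 \<noteq> - \<zeta>" "u b0 \<noteq> 0" by blast
      define \<gamma> where "\<gamma> = - \<alpha>0 - \<zeta>"
      have gG: "\<gamma> \<in> \<Gamma>" unfolding \<gamma>_def using sg_diff[OF sg sg_neg[OF sg w(1)] z] .
      have gn: "\<gamma> \<noteq> - \<zeta>" unfolding \<gamma>_def using w(2) by simp
      obtain h where h: "h \<in> U" "\<forall>x. x + \<zeta> \<noteq> 0 \<longrightarrow> h x = vec \<gamma> x"
        using gen[OF U(1) u(1) b0(2) b0(1) gG gn] by blast
      have "act (cB \<zeta> \<eta>) \<alpha>0 d0 h \<in> U" using submoduleD(5)[OF U(1) w(1-3) h(1)] .
      moreover have "act (cB \<zeta> \<eta>) \<alpha>0 d0 h = (\<lambda>x. pair \<eta> d0 * vec (- \<zeta>) x)"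
      proof
        fix x
        show "act (cB \<zeta> \<eta>) \<alpha>0 d0 h x = pair \<eta> d0 * vec (- \<zeta>) x"
        proof (cases "x = - \<zeta>")
          case True
          have xg: "x - \<alpha>0 = \<gamma>" unfolding True \<gamma>_def by (simp add: algebra_simps)
          have "\<gamma> + \<zeta> \<noteq> 0" using gn by (simp add: plus_eq0)
          hence "h \<gamma> = 1" using h(2) by (simp add: vec_def)
          moreover have "cB \<zeta> \<eta> \<alpha>0 d0 \<gamma> = pair \<eta> d0" unfolding cB_def \<gamma>_def by simp
          ultimately show ?thesis unfolding act_def xg using True by (simp add: vec_def)
        next
          case xn: False
          show ?thesis
          proof (cases "x - \<alpha>0 = - \<zeta>")
            case True
            thus ?thesis using xn cB_at0[OF w(2)] unfolding act_def by (simp add: vec_def)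
          next
            case False
            hence "x - \<alpha>0 + \<zeta> \<noteq> 0" by (simp add: plus_eq0)
            hence "h (x - \<alpha>0) = vec \<gamma> (x - \<alpha>0)" using h(2) by blast
            moreover have "x - \<alpha>0 \<noteq> \<gamma>"
            proof
              assume eq: "x - \<alpha>0 = \<gamma>"
              have "x = (x - \<alpha>0) + \<alpha>0" by simp
              also have "\<dots> = - \<zeta>" unfolding eq \<gamma>_def by (simp add: algebra_simps)
              finally show False using xn by simp
            qed
            ultimately show ?thesis using xn unfolding act_def by (simp add: vec_def)
          qed
        qed
      qed
      ultimately have "(\<lambda>x. pair \<eta> d0 * vec (- \<zeta>) x) \<in> U" by simp
      from submoduleD(4)[OF U(1) this, of "1 / pair \<eta> d0"]
      show ?thesis using w(4) by simp
    qed
  qed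
  have msnz: "modspace \<Gamma> \<noteq> {\<lambda>_. 0}" using ve(1) vec_nz by blast
  have "\<not> (\<exists>U W. submodule \<Gamma> (cB \<zeta> \<eta>) U \<and> submodule \<Gamma> (cB \<zeta> \<eta>) W \<and> U \<noteq> {\<lambda>_. 0} \<and> W \<noteq> {\<lambda>_. 0}
           \<and> U \<inter> W = {\<lambda>_. 0} \<and> modspace \<Gamma> = {h. \<exists>f\<in>U. \<exists>g\<in>W. h = (\<lambda>b. f b + g b)})"
  proof
    assume "\<exists>U W. submodule \<Gamma> (cB \<zeta> \<eta>) U \<and> submodule \<Gamma> (cB \<zeta> \<eta>) W \<and> U \<noteq> {\<lambda>_. 0} \<and> W \<noteq> {\<lambda>_. 0}
           \<and> U \<inter> W = {\<lambda>_. 0} \<and> modspace \<Gamma> = {h. \<exists>f\<in>U. \<exists>g\<in>W. h = (\<lambda>b. f b + g b)}"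
    then obtain U W where UW: "submodule \<Gamma> (cB \<zeta> \<eta>) U" "submodule \<Gamma> (cB \<zeta> \<eta>) W" "U \<noteq> {\<lambda>_. 0}" "W \<noteq> {\<lambda>_. 0}"
      "U \<inter> W = {\<lambda>_. 0}" by blast
    have "vec (- \<zeta>) \<in> U \<inter> W" using key[OF UW(1,3)] key[OF UW(2,4)] by blast
    thus False using UW(5) vec_nz by blast
  qed
  hence "indecomposable_mod \<Gamma> (cB \<zeta> \<eta>)" unfolding indecomposable_mod_def using msnz by blast
  thus ?thesis using red quot by blast
qed

lemma cAB0: "pair \<alpha> d = 0 \<Longrightarrow> cA \<zeta> 0 \<alpha> d \<beta> = pair (\<beta> + \<zeta>) d"
  "pair \<alpha> d = 0 \<Longrightarrow> cB \<zeta> 0 \<alpha> d \<beta> = pair (\<beta> + \<zeta>) d"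
proof -
  assume a: "pair \<alpha> d = 0"
  show "cA \<zeta> 0 \<alpha> d \<beta> = pair (\<beta> + \<zeta>) d"
  proof (cases "\<beta> = - \<zeta>")
    case True thus ?thesis unfolding cA_def by simp
  qed (simp add: cA_def)
  show "cB \<zeta> 0 \<alpha> d \<beta> = pair (\<beta> + \<zeta>) d"
  proof (cases "\<beta> = - \<alpha> - \<zeta>")
    case True
    have "\<beta> + \<zeta> = - \<alpha>" using True by simp
    thus ?thesis unfolding cB_def using True a by (simp add: pair_minus)
  qed (simp add: cB_def)
qed

lemma isoAB: "mod_iso \<Gamma> (cA \<zeta> 0) (cB \<zeta> 0)"
proof -
  have "\<forall>(\<alpha>, d)\<in>gens \<Gamma>. \<forall>f\<in>modspace \<Gamma>. id (act (cA \<zeta> 0) \<alpha> d f) = act (cB \<zeta> 0) \<alpha> d (id f)"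
    unfolding gens_def act_def by (auto simp: cAB0)
  moreover have "bij_betw id (modspace \<Gamma>) (modspace \<Gamma>)" by (rule bij_betw_id)
  ultimately show ?thesis unfolding mod_iso_def by (intro exI[of _ id]) auto
qed

lemma isoBM:
  fixes \<Gamma> :: "('n::finite \<Rightarrow> 'a::field) set"
  assumes sg: "add_subgroup \<Gamma>" and z: "\<zeta> \<in> \<Gamma>"
  shows "mod_iso \<Gamma> (cB \<zeta> 0) (cM 0)"
proof -
  define T where "T = (\<lambda>f::('n \<Rightarrow> 'a) \<Rightarrow> 'a. (\<lambda>\<gamma>. f (\<gamma> - \<zeta>)))"
  have shift: "(\<lambda>\<gamma>. f (\<gamma> + s)) \<in> modspace \<Gamma>" if f: "f \<in> modspace \<Gamma>" and s: "s \<in> \<Gamma>" for f s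
  proof -
    have sub: "{\<gamma>. f (\<gamma> + s) \<noteq> 0} \<subseteq> (\<lambda>x. x - s) ` {b. f b \<noteq> 0}"
    proof
      fix b assume "b \<in> {\<gamma>. f (\<gamma> + s) \<noteq> 0}"
      hence "f (b + s) \<noteq> 0" by simp
      moreover have "b = (b + s) - s" by simp
      ultimately show "b \<in> (\<lambda>x. x - s) ` {b. f b \<noteq> 0}" by blast
    qed
    have "finite {b. f b \<noteq> 0}" using f unfolding modspace_def by auto
    hence "finite {\<gamma>. f (\<gamma> + s) \<noteq> 0}" using finite_subset[OF sub] finite_imageI by blast
    moreover have "{\<gamma>. f (\<gamma> + s) \<noteq> 0} \<subseteq> \<Gamma>"
    proof
      fix b assume "b \<in> {\<gamma>. f (\<gamma> + s) \<noteq> 0}"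
      hence "b + s \<in> \<Gamma>" using f unfolding modspace_def by auto
      hence "(b + s) - s \<in> \<Gamma>" using sg_diff[OF sg _ s] by blast
      thus "b \<in> \<Gamma>" by simp
    qed
    ultimately show ?thesis unfolding modspace_def by simp
  qed
  have mz: "- \<zeta> \<in> \<Gamma>" using sg_neg[OF sg z] .
  have sh1: "(\<lambda>\<gamma>. f (\<gamma> - \<zeta>)) \<in> modspace \<Gamma>" if "f \<in> modspace \<Gamma>" for f
    using shift[OF that mz] by simp
  have sh2: "(\<lambda>\<gamma>. f (\<gamma> + \<zeta>)) \<in> modspace \<Gamma>" if "f \<in> modspace \<Gamma>" for f
    using shift[OF that z] .
  have bij: "bij_betw T (modspace \<Gamma>) (modspace \<Gamma>)"
    unfolding T_def
    by (rule bij_betw_byWitness[where f'="\<lambda>f. (\<lambda>\<gamma>. f (\<gamma> + \<zeta>))"]) (auto simp: sh1 sh2)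
  have actc: "T (act (cB \<zeta> 0) \<alpha> d f) = act (cM 0) \<alpha> d (T f)" if p: "pair \<alpha> d = 0" for \<alpha> d f
  proof
    fix \<gamma>
    have e1: "\<gamma> - \<zeta> - \<alpha> + \<zeta> = \<gamma> - \<alpha> + 0" by (simp add: algebra_simps)
    have e2: "\<gamma> - \<zeta> - \<alpha> = \<gamma> - \<alpha> - \<zeta>" by (simp add: algebra_simps)
    show "T (act (cB \<zeta> 0) \<alpha> d f) \<gamma> = act (cM 0) \<alpha> d (T f) \<gamma>"
      unfolding T_def act_def cM_def cAB0(2)[OF p] e1 e2 by simp
  qed
  have "\<forall>(\<alpha>, d)\<in>gens \<Gamma>. \<forall>f\<in>modspace \<Gamma>. T (act (cB \<zeta> 0) \<alpha> d f) = act (cM 0) \<alpha> d (T f)"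
    unfolding gens_def using actc by auto
  moreover have "\<forall>f\<in>modspace \<Gamma>. \<forall>g\<in>modspace \<Gamma>. T (\<lambda>b. f b + g b) = (\<lambda>b. T f b + T g b)"
    unfolding T_def by simp
  moreover have "\<forall>a. \<forall>f\<in>modspace \<Gamma>. T (\<lambda>b. a * f b) = (\<lambda>b. a * T f b)"
    unfolding T_def by simp
  ultimately show ?thesis unfolding mod_iso_def using bij by blast
qed




lemma subT_M:
  shows "submodule \<Gamma> (cM \<mu>) (span_of \<Gamma> {- \<mu>})"
proof -
  have act0: "\<And>\<alpha> d f. \<alpha> \<in> \<Gamma> \<Longrightarrow> \<alpha> \<noteq> 0 \<Longrightarrow> pair \<alpha> d = 0 \<Longrightarrow> f \<in> span_of \<Gamma> {- \<mu>} \<Longrightarrow> act (cM \<mu>) \<alpha> d f = (\<lambda>_. 0)"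
    by (rule act_single_zero) (auto simp: cM_def)
  show ?thesis
  proof (rule submoduleI)
    show "span_of \<Gamma> {- \<mu>} \<subseteq> modspace \<Gamma>" unfolding span_of_def by auto
  next
    fix \<alpha> d f assume "\<alpha> \<in> \<Gamma>" "\<alpha> \<noteq> 0" "pair \<alpha> d = 0" "f \<in> span_of \<Gamma> {- \<mu>}"
    thus "act (cM \<mu>) \<alpha> d f \<in> span_of \<Gamma> {- \<mu>}" using act0 span_zero by metis
  qed (auto simp: span_add span_scale span_zero)
qed

theorem lemma2p1:
  fixes \<Gamma> :: "('n::finite \<Rightarrow> 'a::field_char_0) set"
    and \<mu> \<eta> \<zeta> :: "'n \<Rightarrow> 'a"
  assumes "alg_closed TYPE('a)"
    and "card (UNIV :: 'n set) \<ge> 2"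
    and "add_subgroup \<Gamma>"
    and "nondeg \<Gamma>"
    and "\<zeta> \<in> \<Gamma>"
  shows
    "(\<mu> \<notin> \<Gamma> \<longrightarrow> irreducible_mod \<Gamma> (cM \<mu>))
   \<and> (\<mu> \<in> \<Gamma> \<longrightarrow>
        irreducible_sub \<Gamma> (cM \<mu>) (span_of \<Gamma> (\<Gamma> - {- \<mu>}))
      \<and> irreducible_sub \<Gamma> (cM \<mu>) (span_of \<Gamma> {- \<mu>})
      \<and> span_of \<Gamma> (\<Gamma> - {- \<mu>}) \<inter> span_of \<Gamma> {- \<mu>} = {\<lambda>_. 0}
      \<and> modspace \<Gamma> = {h. \<exists>f\<in>span_of \<Gamma> (\<Gamma> - {- \<mu>}). \<exists>g\<in>span_of \<Gamma> {- \<mu>}.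
                          h = (\<lambda>b. f b + g b)})
   \<and> (\<eta> \<noteq> 0 \<longrightarrow>
        indecomposable_mod \<Gamma> (cA \<zeta> \<eta>) \<and> reducible_mod \<Gamma> (cA \<zeta> \<eta>)
      \<and> indecomposable_mod \<Gamma> (cB \<zeta> \<eta>) \<and> reducible_mod \<Gamma> (cB \<zeta> \<eta>)
      \<and> irreducible_sub \<Gamma> (cA \<zeta> \<eta>) (span_of \<Gamma> (\<Gamma> - {- \<zeta>}))
      \<and> submodule \<Gamma> (cB \<zeta> \<eta>) (span_of \<Gamma> {- \<zeta>})
      \<and> (\<forall>(\<alpha>, d)\<in>gens \<Gamma>. \<forall>f\<in>span_of \<Gamma> {- \<zeta>}. act (cB \<zeta> \<eta>) \<alpha> d f = (\<lambda>_. 0))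
      \<and> irreducible_quot \<Gamma> (cB \<zeta> \<eta>) (span_of \<Gamma> {- \<zeta>}))
   \<and> (\<eta> = 0 \<longrightarrow> mod_iso \<Gamma> (cA \<zeta> 0) (cB \<zeta> 0) \<and> mod_iso \<Gamma> (cB \<zeta> 0) (cM 0))"

proof -
  have sg: "add_subgroup \<Gamma>" and nd: "nondeg \<Gamma>" and card: "card (UNIV :: 'n set) \<ge> 2"
    and z: "\<zeta> \<in> \<Gamma>" using assms by auto
  have P1: "\<mu> \<notin> \<Gamma> \<longrightarrow> irreducible_mod \<Gamma> (cM \<mu>)" using partMa[OF sg nd card] by blast
  have P2: "\<mu> \<in> \<Gamma> \<longrightarrow>
        irreducible_sub \<Gamma> (cM \<mu>) (span_of \<Gamma> (\<Gamma> - {- \<mu>}))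
      \<and> irreducible_sub \<Gamma> (cM \<mu>) (span_of \<Gamma> {- \<mu>})
      \<and> span_of \<Gamma> (\<Gamma> - {- \<mu>}) \<inter> span_of \<Gamma> {- \<mu>} = {\<lambda>_. 0}
      \<and> modspace \<Gamma> = {h. \<exists>f\<in>span_of \<Gamma> (\<Gamma> - {- \<mu>}). \<exists>g\<in>span_of \<Gamma> {- \<mu>}.
                          h = (\<lambda>b. f b + g b)}"
  proof
    assume mu: "\<mu> \<in> \<Gamma>"
    have mz: "- \<mu> \<in> \<Gamma>" using sg_neg[OF sg mu] .
    have i1: "irreducible_sub \<Gamma> (cM \<mu>) (span_of \<Gamma> (\<Gamma> - {- \<mu>}))"
      by (rule irr_N[OF sg nd card subN_M[OF sg]]) (simp add: cM_def)
    have i2: "irreducible_sub \<Gamma> (cM \<mu>) (span_of \<Gamma> {- \<mu>})"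
      using irr_single[OF subT_M mz] .
    show "irreducible_sub \<Gamma> (cM \<mu>) (span_of \<Gamma> (\<Gamma> - {- \<mu>}))
      \<and> irreducible_sub \<Gamma> (cM \<mu>) (span_of \<Gamma> {- \<mu>})
      \<and> span_of \<Gamma> (\<Gamma> - {- \<mu>}) \<inter> span_of \<Gamma> {- \<mu>} = {\<lambda>_. 0}
      \<and> modspace \<Gamma> = {h. \<exists>f\<in>span_of \<Gamma> (\<Gamma> - {- \<mu>}). \<exists>g\<in>span_of \<Gamma> {- \<mu>}.
                          h = (\<lambda>b. f b + g b)}"
      using i1 i2 decomp[OF mz] by blast
  qed
  have P3: "\<eta> \<noteq> 0 \<longrightarrow>
        indecomposable_mod \<Gamma> (cA \<zeta> \<eta>) \<and> reducible_mod \<Gamma> (cA \<zeta> \<eta>)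
      \<and> indecomposable_mod \<Gamma> (cB \<zeta> \<eta>) \<and> reducible_mod \<Gamma> (cB \<zeta> \<eta>)
      \<and> irreducible_sub \<Gamma> (cA \<zeta> \<eta>) (span_of \<Gamma> (\<Gamma> - {- \<zeta>}))
      \<and> submodule \<Gamma> (cB \<zeta> \<eta>) (span_of \<Gamma> {- \<zeta>})
      \<and> (\<forall>(\<alpha>, d)\<in>gens \<Gamma>. \<forall>f\<in>span_of \<Gamma> {- \<zeta>}. act (cB \<zeta> \<eta>) \<alpha> d f = (\<lambda>_. 0))
      \<and> irreducible_quot \<Gamma> (cB \<zeta> \<eta>) (span_of \<Gamma> {- \<zeta>})"
  proof
    assume eta: "\<eta> \<noteq> 0"
    have A: "indecomposable_mod \<Gamma> (cA \<zeta> \<eta>) \<and> reducible_mod \<Gamma> (cA \<zeta> \<eta>)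
     \<and> irreducible_sub \<Gamma> (cA \<zeta> \<eta>) (span_of \<Gamma> (\<Gamma> - {- \<zeta>}))" using partA[OF sg nd card z eta] .
    have B: "indecomposable_mod \<Gamma> (cB \<zeta> \<eta>) \<and> reducible_mod \<Gamma> (cB \<zeta> \<eta>)
      \<and> irreducible_quot \<Gamma> (cB \<zeta> \<eta>) (span_of \<Gamma> {- \<zeta>})" using partB[OF sg nd card z eta] .
    have S: "submodule \<Gamma> (cB \<zeta> \<eta>) (span_of \<Gamma> {- \<zeta>})" using subT_B(1)[OF sg] .
    have Z: "\<forall>(\<alpha>, d)\<in>gens \<Gamma>. \<forall>f\<in>span_of \<Gamma> {- \<zeta>}. act (cB \<zeta> \<eta>) \<alpha> d f = (\<lambda>_. 0)"
      unfolding gens_def using subT_B(2)[OF sg] by auto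
    show "indecomposable_mod \<Gamma> (cA \<zeta> \<eta>) \<and> reducible_mod \<Gamma> (cA \<zeta> \<eta>)
      \<and> indecomposable_mod \<Gamma> (cB \<zeta> \<eta>) \<and> reducible_mod \<Gamma> (cB \<zeta> \<eta>)
      \<and> irreducible_sub \<Gamma> (cA \<zeta> \<eta>) (span_of \<Gamma> (\<Gamma> - {- \<zeta>}))
      \<and> submodule \<Gamma> (cB \<zeta> \<eta>) (span_of \<Gamma> {- \<zeta>})
      \<and> (\<forall>(\<alpha>, d)\<in>gens \<Gamma>. \<forall>f\<in>span_of \<Gamma> {- \<zeta>}. act (cB \<zeta> \<eta>) \<alpha> d f = (\<lambda>_. 0))
      \<and> irreducible_quot \<Gamma> (cB \<zeta> \<eta>) (span_of \<Gamma> {- \<zeta>})"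
      using A B S Z by blast
  qed
  have P4: "\<eta> = 0 \<longrightarrow> mod_iso \<Gamma> (cA \<zeta> 0) (cB \<zeta> 0) \<and> mod_iso \<Gamma> (cB \<zeta> 0) (cM 0)"
    using isoAB isoBM[OF sg z] by blast
  show ?thesis using P1 P2 P3 P4 by blast
qed


end
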